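(* Let $\mathcal{M}$ be a countable Scott set coded by $M=\bigoplus_i X_i$ and let $C, D, E \subseteq \omega^2$. Suppose $\mathcal{U}^{\mathcal{M}}_C$ is $\mathcal{M}$-cohesive, and both $\mathcal{U}^{\mathcal{M}}_C \cap \mathcal{U}^{\mathcal{M}}_D$ and $\mathcal{U}^{\mathcal{M}}_C \cap \mathcal{U}^{\mathcal{M}}_E$ are largeness classes. Then $\mathcal{U}^{\mathcal{M}}_C \cap \mathcal{U}^{\mathcal{M}}_D \cap \mathcal{U}^{\mathcal{M}}_E$ is a largeness class.
   Context: A largeness class is a non-empty $\mathcal{A} \subseteq 2^\omega$ closed upward under $\subseteq$ such that for every finite cover $Y_0\cup\dots\cup Y_{k-1}=\omega$ some $Y_j \in \mathcal{A}$. A Scott set is a collection of sets closed under Turing reducibility and join such that every infinite binary tree in it has a path in it; it is countable coded by $M$ if it equals $\{X_i : i\in\omega\}$ with $M = \bigoplus_i X_i$. Fix an effective enumeration $\mathcal{U}^Z_0,\mathcal{U}^Z_1,\dots$ (uniform in the oracle $Z$) of all $\Sigma^0_1(Z)$ classes which are upward-closed under $\subseteq$. For $C\subseteq\omega^2$, $\mathcal{U}^{\mathcal{M}}_C = \bigcap_{\langle e,i\rangle\in C}\mathcal{U}^{X_i}_e$. For an infinite set $X$, $\mathcal{L}_X$ is the class of all sets having infinite intersection with $X$. A class $\mathcal{A}$ is $\mathcal{M}$-cohesive if for every $X \in \mathcal{M}$, either $\mathcal{A}\subseteq \mathcal{L}_X$ or $\mathcal{A}\subseteq\mathcal{L}_{\omega\setminus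 X}$. *)

theory Defs
  imports Main "HOL-Library.Nat_Bijection" "HOL-Library.Sublist"
begin

datatype recf =
    Zero
  | Succ
  | Proj nat
  | Comp recf "recf list"
  | Prec recf recf
  | Mn recf
  | Orc

inductive eval :: "nat set \<Rightarrow> recf \<Rightarrow> nat list \<Rightarrow> nat \<Rightarrow> bool" for Ora :: "nat set" where
  eval_Zero: "eval Ora Zero xs 0"
| eval_Succ: "eval Ora Succ (x # xs) (Suc x)"
| eval_Proj: "i < length xs \<Longrightarrow> eval Ora (Proj i) xs (xs ! i)"
| eval_Comp: "list_all2 (\<lambda>g y. eval Ora g xs y) gs ys \<Longrightarrow> eval Ora f ys z \<Longrightarrow> eval Ora (Comp f gs) xs z"
| eval_Prec0: "eval Ora f xs y \<Longrightarrow> eval Ora (Prec f g) (0 # xs) y"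
| eval_PrecS: "eval Ora (Prec f g) (n # xs) z \<Longrightarrow> eval Ora g (z # n # xs) y
               \<Longrightarrow> eval Ora (Prec f g) (Suc n # xs) y"
| eval_Mn: "eval Ora f (y # xs) 0 \<Longrightarrow> (\<forall>z<y. \<exists>v. 0 < v \<and> eval Ora f (z # xs) v)
            \<Longrightarrow> eval Ora (Mn f) xs y"
| eval_Orc: "eval Ora Orc (x # xs) (if x \<in> Ora then 1 else 0)"

definition turing_le :: "nat set \<Rightarrow> nat set \<Rightarrow> bool" where
  "turing_le A B \<longleftrightarrow> (\<exists>p. \<forall>x. eval B p [x] (if x \<in> A then 1 else 0))"

definition join :: "nat set \<Rightarrow> nat set \<Rightarrow> nat set" where
  "join A B = {2 * n | n. n \<in> A} \<union> {2 * n + 1 | n. n \<in> B}"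

definition code :: "bool list \<Rightarrow> nat" where
  "code \<sigma> = list_encode (map (\<lambda>b. if b then 1 else 0) \<sigma>)"

definition restr :: "nat set \<Rightarrow> nat \<Rightarrow> bool list" where
  "restr X n = map (\<lambda>i. i \<in> X) [0..<n]"

definition binary_tree :: "nat set \<Rightarrow> bool" where
  "binary_tree T \<longleftrightarrow> T \<subseteq> range code \<and>
     (\<forall>\<sigma> \<tau>. code \<sigma> \<in> T \<longrightarrow> prefix \<tau> \<sigma> \<longrightarrow> code \<tau> \<in> T)"

definition is_path :: "nat set \<Rightarrow> nat set \<Rightarrow> bool" where
  "is_path X T \<longleftrightarrow> (\<forall>n. code (restr X n) \<in> T)"

definition scott_set :: "nat set set \<Rightarrow> bool" where
  "scott_set S \<longleftrightarrow>
     (\<forall>X\<in>S. \<forall>Y. turing_le Y X \<longrightarrow> Y \<in> S) \<and>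
     (\<forall>X\<in>S. \<forall>Y\<in>S. join X Y \<in> S) \<and>
     (\<forall>T\<in>S. binary_tree T \<and> infinite T \<longrightarrow> (\<exists>X\<in>S. is_path X T))"

text \<open>The set coded by a sequence: M = join of all X i.\<close>
definition coded_by :: "(nat \<Rightarrow> nat set) \<Rightarrow> nat set" where
  "coded_by X = {prod_encode (i, n) | i n. n \<in> X i}"

definition upward_closed :: "nat set set \<Rightarrow> bool" where
  "upward_closed A \<longleftrightarrow> (\<forall>X Y. X \<in> A \<longrightarrow> X \<subseteq> Y \<longrightarrow> Y \<in> A)"

definition largeness :: "nat set set \<Rightarrow> bool" where
  "largeness A \<longleftrightarrow> A \<noteq> {} \<and> upward_closed A \<and>
     (\<forall>k (Y :: nat \<Rightarrow> nat set). (\<Union>j<k. Y j) = UNIV \<longrightarrow> (\<exists>j<k. Y j \<in> A))"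

definition ce_in :: "nat set \<Rightarrow> nat set \<Rightarrow> bool" where
  "ce_in Z W \<longleftrightarrow> (\<exists>p. W = {x. \<exists>y. eval Z p [x] y})"

definition sigma01 :: "nat set \<Rightarrow> nat set set \<Rightarrow> bool" where
  "sigma01 Z V \<longleftrightarrow> (\<exists>W. ce_in Z W \<and> V = {X. \<exists>n. code (restr X n) \<in> W})"

definition effective_enum :: "(nat set \<Rightarrow> nat \<Rightarrow> nat set set) \<Rightarrow> bool" where
  "effective_enum U \<longleftrightarrow>
     (\<exists>p. \<forall>Z e. U Z e = {X. \<exists>n y. eval Z p [e, code (restr X n)] y}) \<and>
     (\<forall>Z e. upward_closed (U Z e)) \<and>
     (\<forall>Z V. sigma01 Z V \<and> upward_closed V \<longrightarrow> (\<exists>e. U Z e = V))"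

definition UM :: "(nat set \<Rightarrow> nat \<Rightarrow> nat set set) \<Rightarrow> (nat \<Rightarrow> nat set) \<Rightarrow> (nat \<times> nat) set \<Rightarrow> nat set set" where
  "UM U X C = {A. \<forall>(e, i)\<in>C. A \<in> U (X i) e}"

definition L :: "nat set \<Rightarrow> nat set set" where
  "L Y = {A. infinite (A \<inter> Y)}"

definition M_cohesive :: "nat set set \<Rightarrow> nat set set \<Rightarrow> bool" where
  "M_cohesive S A \<longleftrightarrow> (\<forall>Y\<in>S. A \<subseteq> L Y \<or> A \<subseteq> L (- Y))"

end

theory Submission
  imports Defs
begin
definition comp :: "nat set \<Rightarrow> recf \<Rightarrow> nat \<Rightarrow> (nat list \<Rightarrow> nat) \<Rightarrow> bool" where
  "comp Z P n f \<longleftrightarrow> (\<forall>xs. length xs = n \<longrightarrow> eval Z P xs (f xs))"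

lemma compI: "(\<And>xs. length xs = n \<Longrightarrow> eval Z P xs (f xs)) \<Longrightarrow> comp Z P n f"
  by (auto simp: comp_def)
lemma compD: "comp Z P n f \<Longrightarrow> length xs = n \<Longrightarrow> eval Z P xs (f xs)"
  by (auto simp: comp_def)
lemma comp_cong: "comp Z P n f \<Longrightarrow> (\<And>xs. length xs = n \<Longrightarrow> f xs = g xs) \<Longrightarrow> comp Z P n g"
  by (auto simp: comp_def)

lemma comp_eqn: "comp Z P n f \<Longrightarrow> n = m \<Longrightarrow> (\<And>xs. length xs = m \<Longrightarrow> f xs = g xs) \<Longrightarrow> comp Z P m g"
  by (auto simp: comp_def)

lemma comp_Zero: "comp Z Zero n (\<lambda>_. 0)"
  by (auto simp: comp_def intro: eval.intros)
lemma comp_Proj: "i < n \<Longrightarrow> comp Z (Proj i) n (\<lambda>xs. xs ! i)"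
  by (auto simp: comp_def intro: eval.intros)
lemma comp_Succ: "0 < n \<Longrightarrow> comp Z Succ n (\<lambda>xs. Suc (hd xs))"
  unfolding comp_def
proof (intro allI impI)
  fix xs :: "nat list" assume "length xs = n" "0 < n"
  then obtain x ys where "xs = x # ys" by (cases xs) auto
  then show "eval Z Succ xs (Suc (hd xs))" by (auto intro: eval.intros)
qed
lemma comp_Orc: "0 < n \<Longrightarrow> comp Z Orc n (\<lambda>xs. if hd xs \<in> Z then 1 else 0)"
  unfolding comp_def
proof (intro allI impI)
  fix xs :: "nat list" assume "length xs = n" "0 < n"
  then obtain x ys where "xs = x # ys" by (cases xs) auto
  moreover have "eval Z Orc (x # ys) (if x \<in> Z then 1 else 0)" by (rule eval.intros)
  ultimately show "eval Z Orc xs (if hd xs \<in> Z then 1 else 0)" by simp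
qed

lemma comp_Comp: "comp Z f (length gs) h \<Longrightarrow> list_all2 (\<lambda>g G. comp Z g n G) gs Gs
  \<Longrightarrow> comp Z (Comp f gs) n (\<lambda>xs. h (map (\<lambda>G. G xs) Gs))"
  unfolding comp_def
proof (intro allI impI)
  fix xs :: "nat list" assume f: "\<forall>xs. length xs = length gs \<longrightarrow> eval Z f xs (h xs)"
    and g: "list_all2 (\<lambda>g G. \<forall>xs. length xs = n \<longrightarrow> eval Z g xs (G xs)) gs Gs" and l: "length xs = n"
  have "list_all2 (\<lambda>g y. eval Z g xs y) gs (map (\<lambda>G. G xs) Gs)"
    using g l by (auto simp: list_all2_conv_all_nth)
  moreover have "length (map (\<lambda>G. G xs) Gs) = length gs" using g by (simp add: list_all2_lengthD)
  ultimately show "eval Z (Comp f gs) xs (h (map (\<lambda>G. G xs) Gs))" using f by (auto intro: eval.intros)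
qed

lemma comp_C1: "comp Z f 1 h \<Longrightarrow> comp Z g n G \<Longrightarrow> comp Z (Comp f [g]) n (\<lambda>xs. h [G xs])"
  using comp_Comp[of Z f "[g]" h n "[G]"] by simp
lemma comp_C2: "comp Z f 2 h \<Longrightarrow> comp Z g1 n G1 \<Longrightarrow> comp Z g2 n G2 \<Longrightarrow> comp Z (Comp f [g1,g2]) n (\<lambda>xs. h [G1 xs, G2 xs])"
  using comp_Comp[of Z f "[g1,g2]" h n "[G1,G2]"] by (simp add: numeral_2_eq_2)
lemma comp_C3: "comp Z f 3 h \<Longrightarrow> comp Z g1 n G1 \<Longrightarrow> comp Z g2 n G2 \<Longrightarrow> comp Z g3 n G3 \<Longrightarrow> comp Z (Comp f [g1,g2,g3]) n (\<lambda>xs. h [G1 xs, G2 xs, G3 xs])"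
  using comp_Comp[of Z f "[g1,g2,g3]" h n "[G1,G2,G3]"] by (simp add: numeral_3_eq_3)

fun precf :: "(nat list \<Rightarrow> nat) \<Rightarrow> (nat list \<Rightarrow> nat) \<Rightarrow> nat \<Rightarrow> nat list \<Rightarrow> nat" where
  "precf a b 0 ys = a ys" | "precf a b (Suc m) ys = b (precf a b m ys # m # ys)"

lemma comp_Prec: "comp Z f n a \<Longrightarrow> comp Z g (Suc (Suc n)) b \<Longrightarrow> comp Z (Prec f g) (Suc n) (\<lambda>xs. precf a b (hd xs) (tl xs))"
  unfolding comp_def
proof (intro allI impI)
  fix xs :: "nat list" assume f: "\<forall>xs. length xs = n \<longrightarrow> eval Z f xs (a xs)"
    and g: "\<forall>xs. length xs = Suc (Suc n) \<longrightarrow> eval Z g xs (b xs)" and l: "length xs = Suc n"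
  then obtain m ys where xs: "xs = m # ys" and ly: "length ys = n" by (cases xs) auto
  have "eval Z (Prec f g) (m # ys) (precf a b m ys)"
  proof (induction m)
    case 0 then show ?case using f ly by (auto intro: eval.intros)
  next
    case (Suc m) then show ?case using g ly by (auto intro: eval.intros)
  qed
  then show "eval Z (Prec f g) xs (precf a b (hd xs) (tl xs))" using xs by simp
qed

fun cnst :: "nat \<Rightarrow> recf" where
  "cnst 0 = Zero" | "cnst (Suc c) = Comp Succ [cnst c]"
lemma comp_cnst: "comp Z (cnst c) n (\<lambda>_. c)"
proof (induction c)
  case 0 then show ?case by (simp add: comp_Zero)
next
  case (Suc c) then show ?case by (auto intro!: comp_cong[OF comp_C1[OF comp_Succ]])
qed

definition "ADD = Prec (Proj 0) (Comp Succ [Proj 0])"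
lemma comp_ADD: "comp Z ADD 2 (\<lambda>xs. xs!0 + xs!1)"
proof -
  have c: "comp Z ADD (Suc 1) (\<lambda>xs. precf (\<lambda>ys. ys!0) (\<lambda>ys. Suc (ys!0)) (hd xs) (tl xs))"
    unfolding ADD_def
    by (intro comp_Prec comp_Proj comp_cong[OF comp_C1[OF comp_Succ comp_Proj]]) auto
  have p: "precf (\<lambda>ys. ys!0) (\<lambda>ys. Suc (ys!0)) m ys = m + ys!0" for m ys
    by (induction m) auto
  show ?thesis
    by (rule comp_eqn[OF c]) (simp, simp only: p, auto simp: numeral_2_eq_2 length_Suc_conv)
qed

definition "PRED = Prec Zero (Proj 1)"
lemma comp_PRED: "comp Z PRED 1 (\<lambda>xs. xs!0 - 1)"
proof -
  have c: "comp Z PRED (Suc 0) (\<lambda>xs. precf (\<lambda>_. 0) (\<lambda>ys. ys!1) (hd xs) (tl xs))"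
    unfolding PRED_def by (intro comp_Prec comp_Proj comp_Zero) auto
  have p: "precf (\<lambda>_. 0) (\<lambda>ys. ys!1) m ys = m - 1" for m ys by (cases m) auto
  show ?thesis by (rule comp_eqn[OF c]) (simp, simp only: p, auto simp: length_Suc_conv numeral_2_eq_2 numeral_3_eq_3)
qed

definition "SUBR = Prec (Proj 0) (Comp PRED [Proj 0])"
lemma comp_SUBR: "comp Z SUBR 2 (\<lambda>xs. xs!1 - xs!0)"
proof -
  have c: "comp Z SUBR (Suc 1) (\<lambda>xs. precf (\<lambda>ys. ys!0) (\<lambda>ys. ys!0 - 1) (hd xs) (tl xs))"
    unfolding SUBR_def by (intro comp_Prec comp_Proj comp_cong[OF comp_C1[OF comp_PRED comp_Proj]]) auto
  have p: "precf (\<lambda>ys. ys!0) (\<lambda>ys. ys!0 - 1) m ys = ys!0 - m" for m ys by (induction m) auto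
  show ?thesis by (rule comp_eqn[OF c]) (simp, simp only: p, auto simp: length_Suc_conv numeral_2_eq_2)
qed

definition "SUB = Comp SUBR [Proj 1, Proj 0]"
lemma comp_SUB: "comp Z SUB 2 (\<lambda>xs. xs!0 - xs!1)"
  unfolding SUB_def by (rule comp_cong[OF comp_C2[OF comp_SUBR comp_Proj comp_Proj]]) auto

definition "MULT = Prec Zero (Comp ADD [Proj 0, Proj 2])"
lemma comp_MULT: "comp Z MULT 2 (\<lambda>xs. xs!0 * xs!1)"
proof -
  have c: "comp Z MULT (Suc 1) (\<lambda>xs. precf (\<lambda>_. 0) (\<lambda>ys. ys!0 + ys!2) (hd xs) (tl xs))"
    unfolding MULT_def by (intro comp_Prec comp_Zero comp_cong[OF comp_C2[OF comp_ADD comp_Proj comp_Proj]]) auto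
  have p: "precf (\<lambda>_. 0) (\<lambda>ys. ys!0 + ys!2) m ys = m * ys!0" for m ys by (induction m) auto
  show ?thesis by (rule comp_eqn[OF c]) (simp, simp only: p, auto simp: length_Suc_conv numeral_2_eq_2)
qed

definition "IFZ = Prec (Proj 0) (Proj 3)"
lemma comp_IFZ: "comp Z IFZ 3 (\<lambda>xs. if xs!0 = 0 then xs!1 else xs!2)"
proof -
  have c: "comp Z IFZ (Suc 2) (\<lambda>xs. precf (\<lambda>ys. ys!0) (\<lambda>ys. ys!3) (hd xs) (tl xs))"
    unfolding IFZ_def by (intro comp_Prec comp_Proj) auto
  have p: "precf (\<lambda>ys. ys!0) (\<lambda>ys. ys!3) m ys = (if m = 0 then ys!0 else ys!1)" for m ys by (cases m) auto
  show ?thesis by (rule comp_eqn[OF c]) (simp, simp only: p, auto simp: length_Suc_conv numeral_2_eq_2 numeral_3_eq_3)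
qed

definition "TRI = Prec Zero (Comp Succ [Comp ADD [Proj 0, Proj 1]])"
lemma comp_TRI: "comp Z TRI 1 (\<lambda>xs. triangle (xs!0))"
proof -
  have c: "comp Z TRI (Suc 0) (\<lambda>xs. precf (\<lambda>_. 0) (\<lambda>ys. Suc (ys!0 + ys!1)) (hd xs) (tl xs))"
    unfolding TRI_def by (intro comp_Prec comp_Zero comp_cong[OF comp_C1[OF comp_Succ comp_C2[OF comp_ADD comp_Proj comp_Proj]]]) auto
  have p: "precf (\<lambda>_. 0) (\<lambda>ys. Suc (ys!0 + ys!1)) m ys = triangle m" for m ys by (induction m) auto
  show ?thesis by (rule comp_eqn[OF c]) (simp, simp only: p, auto simp: length_Suc_conv numeral_2_eq_2 numeral_3_eq_3)
qed

definition "add a b = Comp ADD [a, b]"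
definition "sub a b = Comp SUB [a, b]"
definition "mult a b = Comp MULT [a, b]"
definition "ifz c a b = Comp IFZ [c, a, b]"
definition "suc a = Comp Succ [a]"
definition "prd a = Comp PRED [a]"
definition "tri a = Comp TRI [a]"

lemma comp_add: "comp Z a n A \<Longrightarrow> comp Z b n B \<Longrightarrow> comp Z (add a b) n (\<lambda>xs. A xs + B xs)"
  unfolding add_def by (rule comp_cong[OF comp_C2[OF comp_ADD]]) auto
lemma comp_sub: "comp Z a n A \<Longrightarrow> comp Z b n B \<Longrightarrow> comp Z (sub a b) n (\<lambda>xs. A xs - B xs)"
  unfolding sub_def by (rule comp_cong[OF comp_C2[OF comp_SUB]]) auto
lemma comp_mult: "comp Z a n A \<Longrightarrow> comp Z b n B \<Longrightarrow> comp Z (mult a b) n (\<lambda>xs. A xs * B xs)"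
  unfolding mult_def by (rule comp_cong[OF comp_C2[OF comp_MULT]]) auto
lemma comp_ifz: "comp Z c n C \<Longrightarrow> comp Z a n A \<Longrightarrow> comp Z b n B \<Longrightarrow> comp Z (ifz c a b) n (\<lambda>xs. if C xs = 0 then A xs else B xs)"
  unfolding ifz_def by (rule comp_cong[OF comp_C3[OF comp_IFZ]]) auto
lemma comp_suc: "comp Z a n A \<Longrightarrow> comp Z (suc a) n (\<lambda>xs. Suc (A xs))"
  unfolding suc_def by (rule comp_cong[OF comp_C1[OF comp_Succ]]) auto
lemma comp_prd: "comp Z a n A \<Longrightarrow> comp Z (prd a) n (\<lambda>xs. A xs - 1)"
  unfolding prd_def by (rule comp_cong[OF comp_C1[OF comp_PRED]]) auto
lemma comp_tri: "comp Z a n A \<Longrightarrow> comp Z (tri a) n (\<lambda>xs. triangle (A xs))"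
  unfolding tri_def by (rule comp_cong[OF comp_C1[OF comp_TRI]]) auto

lemma comp_Mn: "comp Z F (Suc n) G \<Longrightarrow> (\<And>xs. length xs = n \<Longrightarrow> \<exists>y. G (y#xs) = 0)
  \<Longrightarrow> comp Z (Mn F) n (\<lambda>xs. LEAST y. G (y#xs) = 0)"
  unfolding comp_def
proof (intro allI impI)
  fix xs :: "nat list"
  assume F: "\<forall>xs. length xs = Suc n \<longrightarrow> eval Z F xs (G xs)" and ex: "\<And>xs. length xs = n \<Longrightarrow> \<exists>y. G (y#xs) = 0"
    and l: "length xs = n"
  let ?y = "LEAST y. G (y#xs) = 0"
  have "G (?y # xs) = 0" using ex[OF l] by (rule LeastI_ex)
  then have "eval Z F (?y # xs) 0" using F l by (metis length_Cons)
  moreover have "\<forall>z<?y. \<exists>v. 0 < v \<and> eval Z F (z # xs) v"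
  proof (intro allI impI)
    fix z assume "z < ?y"
    then have "G (z#xs) \<noteq> 0" using not_less_Least by blast
    then show "\<exists>v. 0 < v \<and> eval Z F (z # xs) v" using F l by (metis length_Cons neq0_conv)
  qed
  ultimately show "eval Z (Mn F) xs ?y" by (rule eval.intros)
qed

lemma comp_shift: "comp Z g m G \<Longrightarrow> comp Z (Comp g (map Proj [k..<k+m])) (k+m) (\<lambda>xs. G (drop k xs))"
proof -
  assume g: "comp Z g m G"
  have "list_all2 (\<lambda>g G. comp Z g (k+m) G) (map Proj [k..<k+m]) (map (\<lambda>i xs. xs!i) [k..<k+m])"
    by (auto simp: list_all2_conv_all_nth intro!: comp_Proj)
  from comp_Comp[OF _ this, of g G] g
  have c: "comp Z (Comp g (map Proj [k..<k+m])) (k+m) (\<lambda>xs. G (map (\<lambda>i. xs!i) [k..<k+m]))"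
    by (simp add: comp_def o_def)
  have e: "length xs = k+m \<Longrightarrow> map (\<lambda>i. xs!i) [k..<k+m] = drop k xs" for xs :: "nat list"
    by (rule nth_equalityI) auto
  show ?thesis
    by (rule comp_cong[OF c]) (simp add: e)
qed

definition "WW = Mn (sub (suc (Proj 1)) (tri (suc (Proj 0))))"
definition wfun :: "nat \<Rightarrow> nat" where "wfun c = (LEAST y. Suc c - triangle (Suc y) = 0)"

lemma triangle_ge: "n \<le> triangle n"
  by (induction n) auto

lemma comp_WW: "comp Z WW 1 (\<lambda>xs. wfun (xs!0))"
proof -
  have c: "comp Z WW 1 (\<lambda>xs. LEAST y. Suc ((y#xs)!1) - triangle (Suc ((y#xs)!0)) = 0)"
    unfolding WW_def
  proof (rule comp_Mn)
    show "comp Z (sub (suc (Proj 1)) (tri (suc (Proj 0)))) (Suc 1) (\<lambda>xs. Suc (xs!1) - triangle (Suc (xs!0)))"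
      by (intro comp_sub comp_suc comp_tri comp_Proj) auto
    fix xs :: "nat list" assume "length xs = 1"
    show "\<exists>y. Suc ((y#xs)!1) - triangle (Suc ((y#xs)!0)) = 0"
      by (rule exI[of _ "xs!0"]) (simp add: triangle_ge)
  qed
  show ?thesis by (rule comp_cong[OF c]) (simp add: wfun_def)
qed

lemma wfun_props: "triangle (wfun c) \<le> c \<and> c < triangle (Suc (wfun c))"
proof -
  have ex: "\<exists>y. Suc c - triangle (Suc y) = 0" by (rule exI[of _ c]) (simp add: triangle_ge)
  have 1: "c < triangle (Suc (wfun c))"
    using LeastI_ex[OF ex] unfolding wfun_def by simp
  have 2: "triangle (wfun c) \<le> c"
  proof (cases "wfun c")
    case 0 then show ?thesis by simp
  next
    case (Suc w)
    then have "w < wfun c" by simp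
    then have "Suc c - triangle (Suc w) \<noteq> 0" unfolding wfun_def using not_less_Least by blast
    then show ?thesis using Suc by simp
  qed
  show ?thesis using 1 2 by simp
qed

lemma prod_decode_wfun: "prod_decode c = (c - triangle (wfun c), wfun c - (c - triangle (wfun c)))"
proof -
  from wfun_props[of c] have a: "triangle (wfun c) \<le> c" and b: "c < triangle (wfun c) + Suc (wfun c)" by auto
  have "prod_encode (c - triangle (wfun c), wfun c - (c - triangle (wfun c))) = c"
    using a b unfolding prod_encode_def by simp
  then show ?thesis by (metis prod_encode_inverse)
qed

definition "PFST = sub (Proj 0) (tri WW)"
definition "PSND = sub WW PFST"
lemma comp_PFST: "comp Z PFST 1 (\<lambda>xs. fst (prod_decode (xs!0)))"
  unfolding PFST_def
  by (rule comp_cong[OF comp_sub[OF comp_Proj comp_tri[OF comp_WW]]]) (simp, subst prod_decode_wfun, simp)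
lemma comp_PSND: "comp Z PSND 1 (\<lambda>xs. snd (prod_decode (xs!0)))"
  unfolding PSND_def
  by (rule comp_cong[OF comp_sub[OF comp_WW comp_PFST]]) (simp, subst (1 2) prod_decode_wfun, simp)

definition lhd :: "nat \<Rightarrow> nat" where "lhd c = fst (prod_decode (c - 1))"
definition ltl :: "nat \<Rightarrow> nat" where "ltl c = snd (prod_decode (c - 1))"
definition ldrop :: "nat \<Rightarrow> nat \<Rightarrow> nat" where "ldrop i c = (ltl ^^ i) c"
definition lnth :: "nat \<Rightarrow> nat \<Rightarrow> nat" where "lnth c i = lhd (ldrop i c)"
definition llen :: "nat \<Rightarrow> nat" where "llen c = (\<Sum>i<c. if ldrop i c = 0 then 0 else 1)"
definition lcons :: "nat \<Rightarrow> nat \<Rightarrow> nat" where "lcons a r = Suc (triangle (a + r) + a)"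

lemma lcons_enc: "lcons a (list_encode l) = list_encode (a # l)"
  by (simp add: lcons_def prod_encode_def)
lemma lhd_enc: "lhd (list_encode (x # l)) = x" by (simp add: lhd_def)
lemma ltl_enc: "ltl (list_encode l) = list_encode (tl l)"
proof (cases l)
  case Nil
  have "prod_encode (0,0) = 0" by (simp add: prod_encode_def)
  then have "prod_decode 0 = (0,0)" by (metis prod_encode_inverse)
  then show ?thesis using Nil by (simp add: ltl_def)
qed (simp add: ltl_def)
lemma ldrop_enc: "ldrop i (list_encode l) = list_encode (drop i l)"
proof (induction i arbitrary: l)
  case 0 then show ?case by (simp add: ldrop_def)
next
  case (Suc i)
  have "ldrop (Suc i) (list_encode l) = ldrop i (ltl (list_encode l))"
    by (simp only: ldrop_def funpow_Suc_right comp_apply)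
  also have "\<dots> = list_encode (drop i (tl l))" by (simp add: ltl_enc Suc)
  finally show ?case by (simp add: drop_Suc)
qed
lemma lnth_enc: "i < length l \<Longrightarrow> lnth (list_encode l) i = l ! i"
proof -
  assume "i < length l"
  then have "drop i l = l!i # drop (Suc i) l" by (simp add: Cons_nth_drop_Suc)
  then show ?thesis by (simp add: lnth_def ldrop_enc lhd_def)
qed
lemma length_le_enc: "length l \<le> list_encode l"
proof (induction l)
  case (Cons x l) then show ?case using le_prod_encode_2[of "list_encode l" x] by simp
qed simp
lemma llen_enc: "llen (list_encode l) = length l"
proof -
  have eq: "(ldrop i (list_encode l) = 0) = (length l \<le> i)" for i
    by (metis ldrop_enc list_encode.simps(1) list_encode_eq drop_eq_Nil)
  have s: "(\<Sum>i<c. if n \<le> i then 0 else (1::nat)) = min n c" for n c by (induction c) auto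
  show ?thesis unfolding llen_def eq s using length_le_enc[of l] by simp
qed

definition "LHD = Comp PFST [prd (Proj 0)]"
definition "LTL = Comp PSND [prd (Proj 0)]"
lemma comp_LHD: "comp Z LHD 1 (\<lambda>xs. lhd (xs!0))"
  unfolding LHD_def lhd_def by (rule comp_cong[OF comp_C1[OF comp_PFST comp_prd[OF comp_Proj]]]) auto
lemma comp_LTL: "comp Z LTL 1 (\<lambda>xs. ltl (xs!0))"
  unfolding LTL_def ltl_def by (rule comp_cong[OF comp_C1[OF comp_PSND comp_prd[OF comp_Proj]]]) auto

definition "LDROP = Prec (Proj 0) (Comp LTL [Proj 0])"
lemma comp_LDROP: "comp Z LDROP 2 (\<lambda>xs. ldrop (xs!0) (xs!1))"
proof -
  have c: "comp Z LDROP (Suc 1) (\<lambda>xs. precf (\<lambda>ys. ys!0) (\<lambda>ys. ltl (ys!0)) (hd xs) (tl xs))"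
    unfolding LDROP_def by (intro comp_Prec comp_Proj comp_cong[OF comp_C1[OF comp_LTL comp_Proj]]) auto
  have p: "precf (\<lambda>ys. ys!0) (\<lambda>ys. ltl (ys!0)) m ys = ldrop m (ys!0)" for m ys
    by (induction m) (auto simp: ldrop_def)
  show ?thesis by (rule comp_eqn[OF c]) (simp, simp only: p, auto simp: length_Suc_conv numeral_2_eq_2)
qed

definition "lnthp c i = Comp LHD [Comp LDROP [i, c]]"
lemma comp_lnthp: "comp Z c n C \<Longrightarrow> comp Z i n I \<Longrightarrow> comp Z (lnthp c i) n (\<lambda>xs. lnth (C xs) (I xs))"
  unfolding lnthp_def lnth_def
  by (rule comp_cong[OF comp_C1[OF comp_LHD comp_C2[OF comp_LDROP]]]) auto

definition "CNT = Prec Zero (add (Proj 0) (ifz (Comp LDROP [Proj 1, Proj 2]) Zero (cnst 1)))"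
definition "LLEN = Comp CNT [Proj 0, Proj 0]"
lemma comp_LLEN: "comp Z LLEN 1 (\<lambda>xs. llen (xs!0))"
proof -
  have c: "comp Z CNT (Suc 1) (\<lambda>xs. precf (\<lambda>_. 0) (\<lambda>ys. ys!0 + (if ldrop (ys!1) (ys!2) = 0 then 0 else 1)) (hd xs) (tl xs))"
    unfolding CNT_def
    by (intro comp_Prec comp_Zero comp_add comp_ifz comp_Proj comp_cnst comp_cong[OF comp_C2[OF comp_LDROP]]) (auto intro!: comp_Proj)
  have p: "precf (\<lambda>_. 0) (\<lambda>ys. ys!0 + (if ldrop (ys!1) (ys!2) = 0 then 0 else 1)) m ys = (\<Sum>i<m. if ldrop i (ys!0) = 0 then 0 else 1)" for m ys
    by (induction m) auto
  have c2: "comp Z CNT 2 (\<lambda>xs. \<Sum>i<xs!0. if ldrop i (xs!1) = 0 then 0 else 1)"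
    by (rule comp_eqn[OF c]) (simp, simp only: p, auto simp: length_Suc_conv numeral_2_eq_2)
  show ?thesis unfolding LLEN_def llen_def by (rule comp_cong[OF comp_C2[OF c2 comp_Proj comp_Proj]]) auto
qed

definition "lconsp a r = suc (add (tri (add a r)) a)"
lemma comp_lconsp: "comp Z a n A \<Longrightarrow> comp Z r n R \<Longrightarrow> comp Z (lconsp a r) n (\<lambda>xs. lcons (A xs) (R xs))"
  unfolding lconsp_def lcons_def by (intro comp_suc comp_add comp_tri)

lemma comp_Cons_shift: "comp Z g (Suc m) G \<Longrightarrow> comp Z a (k+m) A \<Longrightarrow>
   comp Z (Comp g (a # map Proj [k..<k+m])) (k+m) (\<lambda>xs. G (A xs # drop k xs))"
proof -
  assume g: "comp Z g (Suc m) G" and a: "comp Z a (k+m) A"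
  have "list_all2 (\<lambda>g G. comp Z g (k+m) G) (a # map Proj [k..<k+m]) (A # map (\<lambda>i xs. xs!i) [k..<k+m])"
    using a by (auto simp: list_all2_conv_all_nth nth_Cons split: nat.splits intro!: comp_Proj)
  from comp_Comp[OF _ this, of g G] g
  have c: "comp Z (Comp g (a # map Proj [k..<k+m])) (k+m) (\<lambda>xs. G (A xs # map (\<lambda>i. xs!i) [k..<k+m]))"
    by (simp add: comp_def o_def)
  have e: "length xs = k+m \<Longrightarrow> map (\<lambda>i. xs!i) [k..<k+m] = drop k xs" for xs :: "nat list"
    by (rule nth_equalityI) auto
  show ?thesis
    by (rule comp_cong[OF c]) (simp add: e)
qed

definition BP :: "recf \<Rightarrow> nat \<Rightarrow> recf" where
  "BP g n = Prec (cnst 1) (mult (Proj 0) (Comp g (map Proj [1..<1+Suc n])))"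

lemma comp_BP: "comp Z g (Suc n) G \<Longrightarrow> comp Z (BP g n) (Suc n) (\<lambda>xs. \<Prod>t<hd xs. G (t # tl xs))"
proof -
  assume g: "comp Z g (Suc n) G"
  have s: "comp Z (Comp g (map Proj [1..<1+Suc n])) (Suc (Suc n)) (\<lambda>xs. G (drop 1 xs))"
    by (rule comp_eqn[OF comp_shift[OF g, of 1]]) auto
  have c: "comp Z (BP g n) (Suc n) (\<lambda>xs. precf (\<lambda>_. 1) (\<lambda>ys. ys!0 * G (drop 1 ys)) (hd xs) (tl xs))"
    unfolding BP_def
    by (intro comp_Prec comp_cnst comp_mult comp_Proj s) auto
  have p: "precf (\<lambda>_. 1) (\<lambda>ys. ys!0 * G (drop 1 ys)) m ys = (\<Prod>t<m. G (t # ys))" for m ys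
    by (induction m) simp_all
  show ?thesis by (rule comp_cong[OF c]) (simp only: p)
qed

definition BLD :: "recf \<Rightarrow> nat \<Rightarrow> recf" where
  "BLD g n = Comp (Prec Zero (lconsp (Comp g (sub (prd (Proj 2)) (Proj 1) # map Proj [3..<3+n])) (Proj 0)))
     (Proj 0 # map Proj [0..<0+Suc n])"

lemma comp_BLD: "comp Z g (Suc n) G \<Longrightarrow> comp Z (BLD g n) (Suc n) (\<lambda>xs. list_encode (map (\<lambda>t. G (t # tl xs)) [0..<hd xs]))"
proof -
  assume g: "comp Z g (Suc n) G"
  have c: "comp Z (Prec Zero (lconsp (Comp g (sub (prd (Proj 2)) (Proj 1) # map Proj [3..<3+n])) (Proj 0))) (Suc (Suc n))
     (\<lambda>xs. precf (\<lambda>_. 0) (\<lambda>ys. lcons (G ((ys!2 - 1 - ys!1) # drop 3 ys)) (ys!0)) (hd xs) (tl xs))"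
  proof (intro comp_Prec comp_Zero comp_lconsp comp_Proj)
    have a: "comp Z (sub (prd (Proj 2)) (Proj 1)) (3+n) (\<lambda>ys. ys!2 - 1 - ys!1)"
      by (intro comp_sub comp_prd comp_Proj) auto
    show "comp Z (Comp g (sub (prd (Proj 2)) (Proj 1) # map Proj [3..<3+n])) (Suc (Suc (Suc n))) (\<lambda>ys. G ((ys!2 - 1 - ys!1) # drop 3 ys))"
      by (rule comp_eqn[OF comp_Cons_shift[OF g a]]) auto
  qed auto
  have p: "t \<le> m \<Longrightarrow> precf (\<lambda>_. 0) (\<lambda>ys. lcons (G ((ys!2 - 1 - ys!1) # drop 3 ys)) (ys!0)) t (m # ys)
     = list_encode (map (\<lambda>x. G (x # ys)) [m-t..<m])" for t m ys
  proof (induction t)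
    case 0 then show ?case by simp
  next
    case (Suc t)
    have lt: "m - Suc t < m" using Suc.prems by simp
    have "[m - Suc t..<m] = (m - Suc t) # [Suc (m - Suc t)..<m]" using upt_conv_Cons[OF lt] .
    moreover have "Suc (m - Suc t) = m - t" using Suc.prems by simp
    ultimately have e: "[m - Suc t..<m] = (m - 1 - t) # [m-t..<m]" by simp
    have "precf (\<lambda>_. 0) (\<lambda>ys. lcons (G ((ys!2 - 1 - ys!1) # drop 3 ys)) (ys!0)) (Suc t) (m # ys)
       = lcons (G ((m - 1 - t) # ys)) (list_encode (map (\<lambda>x. G (x # ys)) [m-t..<m]))"
      using Suc by (simp add: numeral_3_eq_3)
    also have "\<dots> = list_encode (map (\<lambda>x. G (x # ys)) [m - Suc t..<m])"
      unfolding e list.map lcons_enc ..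
    finally show ?case .
  qed
  have c2: "comp Z (BLD g n) (Suc n) (\<lambda>xs. precf (\<lambda>_. 0) (\<lambda>ys. lcons (G ((ys!2 - 1 - ys!1) # drop 3 ys)) (ys!0)) (hd xs) (hd xs # tl xs))"
  proof -
    have a: "comp Z (Proj 0) (0 + Suc n) (\<lambda>xs. xs!0)" by (rule comp_Proj) simp
    show ?thesis unfolding BLD_def apply (rule comp_eqn[OF comp_Cons_shift[OF c a]])
       apply simp
      subgoal for xs by (cases xs) (simp, simp only: list.sel nth_Cons_0 drop_0)
      done
  qed
  show ?thesis by (rule comp_cong[OF c2]) (simp only: p[OF le_refl] diff_self_eq_0)
qed

fun srch :: "(nat \<Rightarrow> nat) \<Rightarrow> nat \<Rightarrow> nat" where
  "srch F 0 = 0"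
| "srch F (Suc m) = (if srch F m \<noteq> 0 then srch F m else (if F m = 0 then 1 else if F m - 1 = 0 then m + 2 else 0))"

fun piter :: "(nat \<Rightarrow> nat \<Rightarrow> nat) \<Rightarrow> nat \<Rightarrow> nat \<Rightarrow> nat" where
  "piter G i 0 = i"
| "piter G i (Suc m) = (if piter G i m = 0 then 0 else G (piter G i m - 1) m)"

fun B :: "(nat \<Rightarrow> bool) \<Rightarrow> recf \<Rightarrow> nat \<Rightarrow> nat list \<Rightarrow> nat" where
  "B Q Zero s xs = 1"
| "B Q Succ s xs = (case xs of [] \<Rightarrow> 0 | x # _ \<Rightarrow> Suc (Suc x))"
| "B Q (Proj i) s xs = (if i < length xs then Suc (xs ! i) else 0)"
| "B Q Orc s xs = (case xs of [] \<Rightarrow> 0 | x # _ \<Rightarrow> if Q x then 2 else 1)"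
| "B Q (Comp f gs) s xs = (if 0 \<in> set (map (\<lambda>g. B Q g s xs) gs) then 0
      else B Q f s (map (\<lambda>g. B Q g s xs - 1) gs))"
| "B Q (Prec f g) s xs = (case xs of [] \<Rightarrow> 0 | n # ys \<Rightarrow> piter (\<lambda>r m. B Q g s (r # m # ys)) (B Q f s ys) n)"
| "B Q (Mn f) s xs = (let st = srch (\<lambda>y. B Q f s (y # xs)) (Suc s) in if st - 1 = 0 then 0 else st - 1)"

lemma srch_char: "srch F m = (if \<exists>y<m. F y \<le> 1 then (if F (LEAST y. F y \<le> 1) = 0 then 1 else Suc (Suc (LEAST y. F y \<le> 1))) else 0)"
proof (induction m)
  case 0 then show ?case by simp
next
  case (Suc m)
  show ?case
  proof (cases "\<exists>y<m. F y \<le> 1")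
    case True
    then have "\<exists>y<Suc m. F y \<le> 1" using less_SucI by blast
    moreover have "srch F m \<noteq> 0" using True Suc by simp
    ultimately show ?thesis using Suc True by simp
  next
    case False
    then have s0: "srch F m = 0" using Suc by simp
    show ?thesis
    proof (cases "F m \<le> 1")
      case True
      have l: "(LEAST y. F y \<le> 1) = m"
        by (rule Least_equality) (use True False in \<open>auto simp: not_le[symmetric]\<close>)
      show ?thesis using True s0 l by auto
    next
      case f: False
      then have "\<not> (\<exists>y<Suc m. F y \<le> 1)" using False less_Suc_eq by auto
      moreover have "F m > 1" using f by simp
      ultimately show ?thesis using s0 by simp
    qed
  qed
qed

lemma piter_cong: "piter G i n \<noteq> 0 \<Longrightarrow> (\<And>r m. G r m \<noteq> 0 \<Longrightarrow> G' r m = G r m) \<Longrightarrow> (i \<noteq> 0 \<Longrightarrow> i' = i)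
  \<Longrightarrow> piter G' i' n = piter G i n"
proof (induction n)
  case 0 then show ?case by simp
next
  case (Suc n)
  then have "piter G i n \<noteq> 0" by (auto split: if_splits)
  then show ?case using Suc by auto
qed

lemma B_mono: "B Q f s xs \<noteq> 0 \<Longrightarrow> s \<le> s' \<Longrightarrow> B Q f s' xs = B Q f s xs"
proof (induction f arbitrary: xs)
  case (Comp f gs)
  have nz: "\<forall>g\<in>set gs. B Q g s xs \<noteq> 0" using Comp.prems by (auto split: if_splits)
  then have eq: "\<forall>g\<in>set gs. B Q g s' xs = B Q g s xs" using Comp by auto
  then have m0: "map (\<lambda>g. B Q g s' xs) gs = map (\<lambda>g. B Q g s xs) gs"
    and m1: "map (\<lambda>g. B Q g s' xs - 1) gs = map (\<lambda>g. B Q g s xs - 1) gs" by auto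
  have z: "0 \<notin> set (map (\<lambda>g. B Q g s xs) gs)" using nz by auto
  then have fz: "B Q f s (map (\<lambda>g. B Q g s xs - 1) gs) \<noteq> 0" using Comp.prems(1) by simp
  have "B Q (Comp f gs) s' xs = B Q f s' (map (\<lambda>g. B Q g s xs - 1) gs)"
    using z by (simp only: B.simps m0 m1 if_False)
  also have "\<dots> = B Q f s (map (\<lambda>g. B Q g s xs - 1) gs)" using Comp.IH(1)[OF fz Comp.prems(2)] .
  also have "\<dots> = B Q (Comp f gs) s xs" using z by simp
  finally show ?case .
next
  case (Prec f g)
  then obtain n ys where xs: "xs = n # ys" by (cases xs) auto
  have "piter (\<lambda>r m. B Q g s' (r # m # ys)) (B Q f s' ys) n = piter (\<lambda>r m. B Q g s (r # m # ys)) (B Q f s ys) n"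
    by (rule piter_cong) (use Prec xs in auto)
  then show ?case using xs by simp
next
  case (Mn f)
  let ?F = "\<lambda>y. B Q f s (y # xs)" and ?F' = "\<lambda>y. B Q f s' (y # xs)"
  have st: "srch ?F (Suc s) - 1 \<noteq> 0" using Mn.prems by (simp add: Let_def split: if_splits)
  then have ex: "\<exists>y<Suc s. ?F y \<le> 1" and fl: "?F (LEAST y. ?F y \<le> 1) \<noteq> 0"
    unfolding srch_char[of ?F] by (auto split: if_splits)
  let ?y = "LEAST y. ?F y \<le> 1"
  have yle: "?y < Suc s" using ex by (meson LeastI_ex Least_le le_less_trans not_less_Least order.strict_implies_order)
  have Fy: "?F ?y \<le> 1" using ex by (meson LeastI_ex)
  have below: "z < ?y \<Longrightarrow> ?F z > 1" for z using not_less_Least[of z "\<lambda>y. ?F y \<le> 1"] by simp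
  have agree: "z \<le> ?y \<Longrightarrow> ?F' z = ?F z" for z
  proof -
    assume "z \<le> ?y"
    then have "?F z \<noteq> 0" using below[of z] fl by (cases "z = ?y") auto
    then show ?thesis using Mn.IH Mn.prems(2) by blast
  qed
  have y': "(LEAST y. ?F' y \<le> 1) = ?y"
  proof (rule Least_equality)
    show "?F' ?y \<le> 1" using agree Fy by simp
    fix z assume "?F' z \<le> 1"
    then show "?y \<le> z" using agree below by (metis leD le_less_linear less_imp_le)
  qed
  have ex': "\<exists>y<Suc s'. ?F' y \<le> 1" using yle Mn.prems(2) agree Fy by (intro exI[of _ ?y]) auto
  have "srch ?F' (Suc s') = srch ?F (Suc s)"
    unfolding srch_char[of ?F'] srch_char[of ?F] using ex ex' y' agree by auto
  then show ?case by (simp add: Let_def)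
qed auto

lemma B_sound: "B Q f s xs = Suc y \<Longrightarrow> eval {x. Q x} f xs y"
proof (induction f arbitrary: xs y)
  case Zero then show ?case by (auto intro: eval.intros)
next
  case Succ then show ?case by (auto intro: eval.intros split: list.splits)
next
  case (Proj i) then show ?case by (auto intro: eval.intros split: if_splits)
next
  case Orc
  then obtain x ys where xs: "xs = x # ys" by (cases xs) auto
  have "eval {x. Q x} Orc (x # ys) (if x \<in> {x. Q x} then 1 else 0)" by (rule eval.intros)
  then show ?case using Orc xs by (auto split: if_splits)
next
  case (Comp f gs)
  have z: "0 \<notin> set (map (\<lambda>g. B Q g s xs) gs)" using Comp.prems by (auto split: if_splits)
  have f: "B Q f s (map (\<lambda>g. B Q g s xs - 1) gs) = Suc y" using Comp.prems z by simp
  have "list_all2 (\<lambda>g y. eval {x. Q x} g xs y) gs (map (\<lambda>g. B Q g s xs - 1) gs)"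
  proof (rule list_all2_all_nthI)
    fix i assume i: "i < length gs"
    then have "gs ! i \<in> set gs" by simp
    moreover have "B Q (gs!i) s xs \<noteq> 0" using z i by (metis (no_types, lifting) image_eqI nth_mem set_map)
    then have "B Q (gs!i) s xs = Suc (B Q (gs!i) s xs - 1)" by simp
    ultimately show "eval {x. Q x} (gs!i) xs (map (\<lambda>g. B Q g s xs - 1) gs ! i)"
      using Comp.IH(2) i by simp
  qed simp
  then show ?case using Comp.IH(1)[OF f] by (rule eval.intros)
next
  case (Prec f g)
  then obtain n ys where xs: "xs = n # ys" by (cases xs) auto
  have "piter (\<lambda>r m. B Q g s (r # m # ys)) (B Q f s ys) n = Suc y \<Longrightarrow> eval {x. Q x} (Prec f g) (n # ys) y" for y
  proof (induction n arbitrary: y)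
    case 0 then show ?case using Prec.IH(1) by (auto intro: eval.intros)
  next
    case (Suc n)
    let ?r = "piter (\<lambda>r m. B Q g s (r # m # ys)) (B Q f s ys) n"
    have r: "?r = Suc (?r - 1)" using Suc.prems by (auto split: if_splits)
    have "eval {x. Q x} (Prec f g) (n # ys) (?r - 1)" using Suc.IH r by simp
    moreover have "B Q g s ((?r - 1) # n # ys) = Suc y" using Suc.prems r by (auto split: if_splits)
    ultimately show ?case using Prec.IH(2) by (auto intro: eval.intros)
  qed
  then show ?case using Prec.prems xs by simp
next
  case (Mn f)
  let ?F = "\<lambda>y. B Q f s (y # xs)"
  have st: "srch ?F (Suc s) - 1 \<noteq> 0" and yv: "y = srch ?F (Suc s) - 2" using Mn.prems by (auto simp: Let_def split: if_splits)
  then have ex: "\<exists>y<Suc s. ?F y \<le> 1" and fl: "?F (LEAST y. ?F y \<le> 1) \<noteq> 0"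
    unfolding srch_char[of ?F] by (auto split: if_splits)
  let ?y = "LEAST y. ?F y \<le> 1"
  have y: "y = ?y" using yv ex fl unfolding srch_char[of ?F] by auto
  have "?F ?y \<le> 1" using ex by (meson LeastI_ex)
  then have Fy: "?F ?y = Suc 0" using fl by simp
  have below: "z < ?y \<Longrightarrow> ?F z > 1" for z using not_less_Least[of z "\<lambda>y. ?F y \<le> 1"] by simp
  have "eval {x. Q x} f (?y # xs) 0" using Mn.IH Fy by simp
  moreover have "\<forall>z<?y. \<exists>v. 0 < v \<and> eval {x. Q x} f (z # xs) v"
  proof (intro allI impI)
    fix z assume "z < ?y"
    then have "?F z > 1" using below by blast
    then have "?F z = Suc (?F z - 1)" "?F z - 1 > 0" by auto
    then show "\<exists>v. 0 < v \<and> eval {x. Q x} f (z # xs) v" using Mn.IH by metis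
  qed
  ultimately show ?case unfolding y by (rule eval.intros)
qed

lemma B_up: "B Q f s xs = Suc y \<Longrightarrow> s \<le> s' \<Longrightarrow> B Q f s' xs = Suc y"
  using B_mono by (metis nat.distinct(1))

lemma la2_bound: assumes "list_all2 (\<lambda>g y. \<exists>s. B Q g s xs = Suc y) gs ys"
  shows "\<exists>s0. \<forall>s'\<ge>s0. map (\<lambda>g. B Q g s' xs) gs = map Suc ys"
  using assms
proof (induct gs ys rule: list_all2_induct)
  case Nil then show ?case by simp
next
  case (Cons g gs y ys)
  obtain s1 where s1: "B Q g s1 xs = Suc y" using Cons(1) by blast
  obtain s0 where s0: "\<forall>s'\<ge>s0. map (\<lambda>g. B Q g s' xs) gs = map Suc ys" using Cons(3) by blast
  show ?case
    by (rule exI[of _ "max s0 s1"]) (auto simp: s0 B_up[OF s1])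
qed

lemma fin_bound: "(\<And>z s s'. P z s \<Longrightarrow> s \<le> s' \<Longrightarrow> P z (s'::nat)) \<Longrightarrow> \<forall>z<(y::nat). \<exists>s. P z s \<Longrightarrow> \<exists>S. \<forall>z<y. P z S"
proof (induction y)
  case 0 then show ?case by simp
next
  case (Suc y)
  obtain S where S: "\<forall>z<y. P z S" using Suc by auto
  obtain s where s: "P y s" using Suc.prems by auto
  have "\<forall>z<Suc y. P z (max S s)"
    using S s Suc.prems(1) by (metis less_Suc_eq max.cobounded1 max.cobounded2)
  then show ?case by blast
qed

lemma B_complete: "eval {x. Q x} f xs y \<Longrightarrow> \<exists>s. B Q f s xs = Suc y"
proof (induction rule: eval.induct)
  case (eval_Comp xs gs ys f z)
  have "list_all2 (\<lambda>g y. \<exists>s. B Q g s xs = Suc y) gs ys"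
    using eval_Comp by (metis (mono_tags, lifting) list_all2_mono)
  then obtain s0 where s0: "\<forall>s'\<ge>s0. map (\<lambda>g. B Q g s' xs) gs = map Suc ys" using la2_bound by blast
  obtain s1 where s1: "B Q f s1 ys = Suc z" using eval_Comp by blast
  let ?S = "max s0 s1"
  have m: "map (\<lambda>g. B Q g ?S xs) gs = map Suc ys" using s0 by simp
  then have m1: "map (\<lambda>g. B Q g ?S xs - 1) gs = ys"
  proof -
    have "map (\<lambda>g. B Q g ?S xs - 1) gs = map (\<lambda>r. r - 1) (map (\<lambda>g. B Q g ?S xs) gs)" by simp
    also have "\<dots> = ys" unfolding m by (simp add: map_idI)
    finally show ?thesis .
  qed
  have "0 \<notin> set (map (\<lambda>g. B Q g ?S xs) gs)" unfolding m by auto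
  then have "B Q (Comp f gs) ?S xs = B Q f ?S ys" by (simp only: B.simps m1 if_False)
  also have "\<dots> = Suc z" using B_up[OF s1] by simp
  finally show ?case by blast
next
  case (eval_Prec0 f xs y g)
  then obtain s where "B Q f s xs = Suc y" by blast
  then show ?case by auto
next
  case (eval_PrecS f g n xs z y)
  obtain s1 where s1: "B Q (Prec f g) s1 (n # xs) = Suc z" using eval_PrecS by blast
  obtain s2 where s2: "B Q g s2 (z # n # xs) = Suc y" using eval_PrecS by blast
  let ?S = "max s1 s2"
  have "piter (\<lambda>r m. B Q g ?S (r # m # xs)) (B Q f ?S xs) n = Suc z" using B_up[OF s1, of ?S] by simp
  then have "B Q (Prec f g) ?S (Suc n # xs) = B Q g ?S (z # n # xs)" by simp
  also have "\<dots> = Suc y" using B_up[OF s2] by simp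
  finally show ?case by blast
next
  case (eval_Mn f y xs)
  obtain s0 where s0: "B Q f s0 (y # xs) = Suc 0" using eval_Mn by blast
  have "\<forall>z<y. \<exists>s. \<exists>v>0. B Q f s (z # xs) = Suc v" using eval_Mn by blast
  then obtain S1 where S1: "\<forall>z<y. \<exists>v>0. B Q f S1 (z # xs) = Suc v"
    using fin_bound[of "\<lambda>z s. \<exists>v>0. B Q f s (z # xs) = Suc v" y] B_up by blast
  let ?S = "max (max s0 S1) y"
  let ?F = "\<lambda>w. B Q f ?S (w # xs)"
  have Fy: "?F y = Suc 0" using B_up[OF s0] by simp
  have Fz: "z < y \<Longrightarrow> ?F z > 1" for z
  proof -
    assume "z < y"
    then obtain v where "v > 0" "B Q f S1 (z # xs) = Suc v" using S1 by blast
    then show ?thesis using B_up[of Q f S1 "z # xs" v ?S] by simp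
  qed
  have l: "(LEAST w. ?F w \<le> 1) = y"
    by (rule Least_equality) (use Fy Fz in \<open>auto simp: not_le[symmetric]\<close>)
  have ex: "\<exists>w<Suc ?S. ?F w \<le> 1" using Fy by (intro exI[of _ y]) auto
  have "srch ?F (Suc ?S) = Suc (Suc y)" unfolding srch_char[of ?F] using ex l Fy by simp
  then have "B Q (Mn f) ?S xs = Suc y" by (simp add: Let_def)
  then show ?case by blast
qed (auto split: list.splits)

fun prodl :: "recf list \<Rightarrow> recf" where
  "prodl [] = cnst 1" | "prodl (P # Ps) = mult P (prodl Ps)"

lemma comp_prodl: "list_all2 (\<lambda>P F. comp Z P m F) Ps Fs \<Longrightarrow> comp Z (prodl Ps) m (\<lambda>xs. prod_list (map (\<lambda>F. F xs) Fs))"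
proof (induct Ps Fs rule: list_all2_induct)
  case Nil then show ?case using comp_cnst[of Z 1 m] by simp
next
  case (Cons P Ps F Fs) then show ?case by (simp add: comp_mult)
qed

fun bt :: "recf \<Rightarrow> nat \<Rightarrow> recf \<Rightarrow> recf" where
  "bt hp n Zero = cnst 1"
| "bt hp n Succ = (if n = 0 then Zero else suc (suc (Proj 1)))"
| "bt hp n (Proj i) = (if i < n then suc (Proj (Suc i)) else Zero)"
| "bt hp n Orc = (if n = 0 then Zero else suc (Comp Orc [Comp hp [Proj 1]]))"
| "bt hp n (Comp f gs) = ifz (prodl (map (bt hp n) gs)) Zero
      (Comp (bt hp (length gs) f) (Proj 0 # map (\<lambda>g. prd (bt hp n g)) gs))"
| "bt hp n (Prec f g) = (if n = 0 then Zero else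
     Comp (Prec (bt hp (n-1) f) (ifz (Proj 0) Zero (Comp (bt hp (Suc n) g) (Proj 2 # prd (Proj 0) # Proj 1 # map Proj [3..<3 + (n-1)]))))
       (Proj 1 # Proj 0 # map Proj [2..<2 + (n-1)]))"
| "bt hp n (Mn f) = ifz (prd (Comp (Prec Zero (ifz (Proj 0)
      (ifz (Comp (bt hp (Suc n) f) (Proj 2 # Proj 1 # map Proj [3..<3+n])) (cnst 1)
         (ifz (prd (Comp (bt hp (Suc n) f) (Proj 2 # Proj 1 # map Proj [3..<3+n]))) (suc (suc (Proj 1))) Zero))
      (Proj 0))) (suc (Proj 0) # map Proj [0..<0+Suc n]))) Zero
     (prd (Comp (Prec Zero (ifz (Proj 0)
      (ifz (Comp (bt hp (Suc n) f) (Proj 2 # Proj 1 # map Proj [3..<3+n])) (cnst 1)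
         (ifz (prd (Comp (bt hp (Suc n) f) (Proj 2 # Proj 1 # map Proj [3..<3+n]))) (suc (suc (Proj 1))) Zero))
      (Proj 0))) (suc (Proj 0) # map Proj [0..<0+Suc n])))"

lemma comp_Cons2_shift: "comp Z g (Suc (Suc m)) G \<Longrightarrow> comp Z a (k+m) A \<Longrightarrow> comp Z b (k+m) Bf \<Longrightarrow>
   comp Z (Comp g (a # b # map Proj [k..<k+m])) (k+m) (\<lambda>xs. G (A xs # Bf xs # drop k xs))"
proof -
  assume g: "comp Z g (Suc (Suc m)) G" and a: "comp Z a (k+m) A" and b: "comp Z b (k+m) Bf"
  have "list_all2 (\<lambda>g G. comp Z g (k+m) G) (a # b # map Proj [k..<k+m]) (A # Bf # map (\<lambda>i xs. xs!i) [k..<k+m])"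
    using a b by (auto simp: list_all2_conv_all_nth nth_Cons split: nat.splits intro!: comp_Proj)
  from comp_Comp[OF _ this, of g G] g
  have c: "comp Z (Comp g (a # b # map Proj [k..<k+m])) (k+m) (\<lambda>xs. G (A xs # Bf xs # map (\<lambda>i. xs!i) [k..<k+m]))"
    by (simp add: comp_def o_def)
  have e: "length xs = k+m \<Longrightarrow> map (\<lambda>i. xs!i) [k..<k+m] = drop k xs" for xs :: "nat list"
    by (rule nth_equalityI) auto
  show ?thesis
    by (rule comp_cong[OF c]) (simp add: e)
qed

lemma comp_Cons3_shift: "comp Z g (Suc (Suc (Suc m))) G \<Longrightarrow> comp Z a (k+m) A \<Longrightarrow> comp Z b (k+m) Bf \<Longrightarrow> comp Z c (k+m) C \<Longrightarrow>
   comp Z (Comp g (a # b # c # map Proj [k..<k+m])) (k+m) (\<lambda>xs. G (A xs # Bf xs # C xs # drop k xs))"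
proof -
  assume g: "comp Z g (Suc (Suc (Suc m))) G" and a: "comp Z a (k+m) A" and b: "comp Z b (k+m) Bf" and c: "comp Z c (k+m) C"
  have "list_all2 (\<lambda>g G. comp Z g (k+m) G) (a # b # c # map Proj [k..<k+m]) (A # Bf # C # map (\<lambda>i xs. xs!i) [k..<k+m])"
    using a b c by (auto simp: list_all2_conv_all_nth nth_Cons split: nat.splits intro!: comp_Proj)
  from comp_Comp[OF _ this, of g G] g
  have c: "comp Z (Comp g (a # b # c # map Proj [k..<k+m])) (k+m) (\<lambda>xs. G (A xs # Bf xs # C xs # map (\<lambda>i. xs!i) [k..<k+m]))"
    by (simp add: comp_def o_def)
  have e: "length xs = k+m \<Longrightarrow> map (\<lambda>i. xs!i) [k..<k+m] = drop k xs" for xs :: "nat list"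
    by (rule nth_equalityI) auto
  show ?thesis
    by (rule comp_cong[OF c]) (simp add: e)
qed

lemma precf_piter: "precf (\<lambda>ys. B Q f (hd ys) (tl ys)) (\<lambda>ys. if ys!0 = 0 then 0 else B Q g (ys!2) ((ys!0 - 1) # ys!1 # drop 3 ys)) m (s # ys)
   = piter (\<lambda>r t. B Q g s (r # t # ys)) (B Q f s ys) m"
  by (induction m) (simp_all add: numeral_3_eq_3)

lemma precf_srch: "precf (\<lambda>_. 0) (\<lambda>ys. if ys!0 = 0 then (if B Q f (ys!2) (ys!1 # drop 3 ys) = 0 then 1
        else if B Q f (ys!2) (ys!1 # drop 3 ys) - 1 = 0 then Suc (Suc (ys!1)) else 0) else ys!0) m (s # ys)
   = srch (\<lambda>y. B Q f s (y # ys)) m"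
  by (induction m) (simp_all add: numeral_3_eq_3)

lemma comp_bt: assumes hp: "comp J hp 1 (\<lambda>xs. h (xs!0))"
  shows "comp J (bt hp n f) (Suc n) (\<lambda>xs. B (\<lambda>x. h x \<in> J) f (hd xs) (tl xs))"
proof (induction f arbitrary: n)
  case Zero
  show ?case unfolding bt.simps by (rule comp_cong[OF comp_cnst]) simp
next
  case Succ
  show ?case
  proof (cases n)
    case 0 then show ?thesis by (auto intro!: comp_cong[OF comp_Zero] simp: length_Suc_conv)
  next
    case (Suc n')
    show ?thesis using Suc
      by (auto intro!: comp_cong[OF comp_suc[OF comp_suc[OF comp_Proj]]] simp: length_Suc_conv)
  qed
next
  case (Proj i)
  show ?case
  proof (cases "i < n")
    case True then show ?thesis
      by (auto intro!: comp_cong[OF comp_suc[OF comp_Proj]] simp: length_Suc_conv)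
  next
    case False then show ?thesis by (auto intro!: comp_cong[OF comp_Zero] simp: length_Suc_conv)
  qed
next
  case Orc
  show ?case
  proof (cases n)
    case 0 then show ?thesis by (auto intro!: comp_cong[OF comp_Zero] simp: length_Suc_conv)
  next
    case (Suc n')
    have c: "comp J (suc (Comp Orc [Comp hp [Proj 1]])) (Suc n) (\<lambda>xs. Suc (if h (xs!1) \<in> J then 1 else 0))"
      by (rule comp_cong[OF comp_suc[OF comp_C1[OF comp_Orc comp_C1[OF hp comp_Proj]]]]) (auto simp: Suc)
    have e: "bt hp n Orc = suc (Comp Orc [Comp hp [Proj 1]])" using Suc by simp
    show ?thesis unfolding e by (rule comp_cong[OF c]) (auto simp: length_Suc_conv Suc split: list.splits)
  qed
next
  case (Comp f gs)
  let ?Q = "\<lambda>x. h x \<in> J"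
  have l1: "list_all2 (\<lambda>P F. comp J P (Suc n) F) (map (bt hp n) gs) (map (\<lambda>g xs. B ?Q g (hd xs) (tl xs)) gs)"
    using Comp.IH(2) by (auto simp: list_all2_conv_all_nth)
  have p1: "comp J (prodl (map (bt hp n) gs)) (Suc n) (\<lambda>xs. prod_list (map (\<lambda>g. B ?Q g (hd xs) (tl xs)) gs))"
    using comp_prodl[OF l1] by (simp add: o_def)
  have l2: "list_all2 (\<lambda>g G. comp J g (Suc n) G) (Proj 0 # map (\<lambda>g. prd (bt hp n g)) gs)
      ((\<lambda>xs. xs!0) # map (\<lambda>g xs. B ?Q g (hd xs) (tl xs) - 1) gs)"
    unfolding list_all2_Cons list_all2_map1 list_all2_map2 list_all2_same
    by (intro conjI ballI comp_Proj comp_prd Comp.IH(2)) auto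
  have p2: "comp J (Comp (bt hp (length gs) f) (Proj 0 # map (\<lambda>g. prd (bt hp n g)) gs)) (Suc n)
      (\<lambda>xs. B ?Q f (xs!0) (map (\<lambda>g. B ?Q g (hd xs) (tl xs) - 1) gs))"
  proof -
    have "comp J (bt hp (length gs) f) (length (Proj 0 # map (\<lambda>g. prd (bt hp n g)) gs)) (\<lambda>ys. B ?Q f (hd ys) (tl ys))"
      by (rule comp_eqn[OF Comp.IH(1)]) auto
    from comp_Comp[OF this l2] show ?thesis by (rule comp_cong) (simp add: o_def)
  qed
  have c: "comp J (bt hp n (Comp f gs)) (Suc n) (\<lambda>xs. if prod_list (map (\<lambda>g. B ?Q g (hd xs) (tl xs)) gs) = 0 then 0
      else B ?Q f (xs!0) (map (\<lambda>g. B ?Q g (hd xs) (tl xs) - 1) gs))"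
    unfolding bt.simps by (rule comp_ifz[OF p1 comp_Zero p2])
  show ?case
  proof (rule comp_cong[OF c])
    fix xs :: "nat list" assume "length xs = Suc n"
    then have "xs!0 = hd xs" by (cases xs) auto
    moreover have "(prod_list (map (\<lambda>g. B ?Q g (hd xs) (tl xs)) gs) = 0) = (0 \<in> set (map (\<lambda>g. B ?Q g (hd xs) (tl xs)) gs))"
      by (rule prod_list_zero_iff)
    ultimately show "(if prod_list (map (\<lambda>g. B ?Q g (hd xs) (tl xs)) gs) = 0 then 0
      else B ?Q f (xs!0) (map (\<lambda>g. B ?Q g (hd xs) (tl xs) - 1) gs)) = B ?Q (Comp f gs) (hd xs) (tl xs)"
      by (simp only: B.simps)
  qed
next
  case (Prec f g)
  let ?Q = "\<lambda>x. h x \<in> J"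
  show ?case
  proof (cases n)
    case 0 then show ?thesis by (auto intro!: comp_cong[OF comp_Zero] simp: length_Suc_conv)
  next
    case (Suc n')
    have F: "comp J (bt hp n' f) (Suc n') (\<lambda>ys. B ?Q f (hd ys) (tl ys))" by (rule Prec.IH(1))
    have g3: "comp J (bt hp (Suc n) g) (Suc (Suc (Suc n'))) (\<lambda>ys. B ?Q g (hd ys) (tl ys))" using Prec.IH(2)[of "Suc n"] Suc by simp
    have a: "comp J (Proj 2) (3+n') (\<lambda>ys. ys!2)" "comp J (prd (Proj 0)) (3+n') (\<lambda>ys. ys!0 - 1)" "comp J (Proj 1) (3+n') (\<lambda>ys. ys!1)"
      apply (rule comp_Proj, simp) apply (rule comp_prd, rule comp_Proj, simp) by (rule comp_Proj, simp)
    have G0: "comp J (Comp (bt hp (Suc n) g) (Proj 2 # prd (Proj 0) # Proj 1 # map Proj [3..<3 + n'])) (Suc (Suc (Suc n')))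
       (\<lambda>ys. B ?Q g (ys!2) ((ys!0 - 1) # ys!1 # drop 3 ys))"
      by (rule comp_eqn[OF comp_Cons3_shift[OF g3 a]]) auto
    have G: "comp J (ifz (Proj 0) Zero (Comp (bt hp (Suc n) g) (Proj 2 # prd (Proj 0) # Proj 1 # map Proj [3..<3 + n']))) (Suc (Suc (Suc n')))
       (\<lambda>ys. if ys!0 = 0 then 0 else B ?Q g (ys!2) ((ys!0 - 1) # ys!1 # drop 3 ys))"
      by (rule comp_ifz[OF comp_Proj comp_Zero G0]) simp
    have PR: "comp J (Prec (bt hp n' f) (ifz (Proj 0) Zero (Comp (bt hp (Suc n) g) (Proj 2 # prd (Proj 0) # Proj 1 # map Proj [3..<3 + n']))))
       (Suc (Suc n')) (\<lambda>zs. precf (\<lambda>ys. B ?Q f (hd ys) (tl ys)) (\<lambda>ys. if ys!0 = 0 then 0 else B ?Q g (ys!2) ((ys!0 - 1) # ys!1 # drop 3 ys)) (hd zs) (tl zs))"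
      by (rule comp_Prec[OF F G])
    have b: "comp J (Proj 1) (2+n') (\<lambda>ys. ys!1)" "comp J (Proj 0) (2+n') (\<lambda>ys. ys!0)"
      by (auto intro!: comp_Proj)
    have c: "comp J (bt hp n (Prec f g)) (Suc n)
       (\<lambda>xs. precf (\<lambda>ys. B ?Q f (hd ys) (tl ys)) (\<lambda>ys. if ys!0 = 0 then 0 else B ?Q g (ys!2) ((ys!0 - 1) # ys!1 # drop 3 ys)) (xs!1) (xs!0 # drop 2 xs))"
    proof -
      have e: "bt hp n (Prec f g) = Comp (Prec (bt hp n' f) (ifz (Proj 0) Zero (Comp (bt hp (Suc n) g) (Proj 2 # prd (Proj 0) # Proj 1 # map Proj [3..<3 + n']))))
       (Proj 1 # Proj 0 # map Proj [2..<2 + n'])" using Suc by simp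
      show ?thesis unfolding e by (rule comp_eqn[OF comp_Cons2_shift[OF PR b]]) (auto simp: Suc)
    qed
    show ?thesis
    proof (rule comp_cong[OF c])
      fix xs :: "nat list" assume "length xs = Suc n"
      then obtain s m ys where xs: "xs = s # m # ys" using Suc by (auto simp: length_Suc_conv)
      show "precf (\<lambda>ys. B ?Q f (hd ys) (tl ys)) (\<lambda>ys. if ys!0 = 0 then 0 else B ?Q g (ys!2) ((ys!0 - 1) # ys!1 # drop 3 ys)) (xs!1) (xs!0 # drop 2 xs)
         = B ?Q (Prec f g) (hd xs) (tl xs)"
        unfolding xs by (simp add: precf_piter)
    qed
  qed
next
  case (Mn f)
  let ?Q = "\<lambda>x. h x \<in> J"
  let ?R = "Comp (bt hp (Suc n) f) (Proj 2 # Proj 1 # map Proj [3..<3+n])"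
  let ?G = "ifz (Proj 0) (ifz ?R (cnst 1) (ifz (prd ?R) (suc (suc (Proj 1))) Zero)) (Proj 0)"
  let ?ST = "Comp (Prec Zero ?G) (suc (Proj 0) # map Proj [0..<0+Suc n])"
  have f2: "comp J (bt hp (Suc n) f) (Suc (Suc n)) (\<lambda>ys. B ?Q f (hd ys) (tl ys))" by (rule Mn.IH)
  have a: "comp J (Proj 2) (3+n) (\<lambda>ys. ys!2)" "comp J (Proj 1) (3+n) (\<lambda>ys. ys!1)"
    by (auto intro!: comp_Proj)
  have R: "comp J ?R (Suc (Suc (Suc n))) (\<lambda>ys. B ?Q f (ys!2) (ys!1 # drop 3 ys))"
    by (rule comp_eqn[OF comp_Cons2_shift[OF f2 a]]) auto
  have G: "comp J ?G (Suc (Suc (Suc n))) (\<lambda>ys. if ys!0 = 0 then (if B ?Q f (ys!2) (ys!1 # drop 3 ys) = 0 then 1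
        else if B ?Q f (ys!2) (ys!1 # drop 3 ys) - 1 = 0 then Suc (Suc (ys!1)) else 0) else ys!0)"
    by (intro comp_ifz comp_Proj R comp_cnst comp_prd comp_suc comp_Zero) auto
  have PR: "comp J (Prec Zero ?G) (Suc (Suc n)) (\<lambda>zs. precf (\<lambda>_. 0) (\<lambda>ys. if ys!0 = 0 then (if B ?Q f (ys!2) (ys!1 # drop 3 ys) = 0 then 1
        else if B ?Q f (ys!2) (ys!1 # drop 3 ys) - 1 = 0 then Suc (Suc (ys!1)) else 0) else ys!0) (hd zs) (tl zs))"
    by (rule comp_Prec[OF comp_Zero G])
  have a0: "comp J (suc (Proj 0)) (0 + Suc n) (\<lambda>ys. Suc (ys!0))" by (auto intro!: comp_suc comp_Proj)
  have ST: "comp J ?ST (Suc n) (\<lambda>xs. srch (\<lambda>y. B ?Q f (hd xs) (y # tl xs)) (Suc (hd xs)))"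
  proof (rule comp_eqn[OF comp_Cons_shift[OF PR a0]])
    fix xs :: "nat list" assume "length xs = Suc n"
    then obtain s ys where xs: "xs = s # ys" by (auto simp: length_Suc_conv)
    show "precf (\<lambda>_. 0) (\<lambda>ys. if ys!0 = 0 then (if B ?Q f (ys!2) (ys!1 # drop 3 ys) = 0 then 1
        else if B ?Q f (ys!2) (ys!1 # drop 3 ys) - 1 = 0 then Suc (Suc (ys!1)) else 0) else ys!0) (hd (Suc (xs!0) # drop 0 xs)) (tl (Suc (xs!0) # drop 0 xs))
      = srch (\<lambda>y. B ?Q f (hd xs) (y # tl xs)) (Suc (hd xs))"
      unfolding xs by (simp only: list.sel nth_Cons_0 drop_0 precf_srch)
  qed simp
  have c: "comp J (bt hp n (Mn f)) (Suc n) (\<lambda>xs. if srch (\<lambda>y. B ?Q f (hd xs) (y # tl xs)) (Suc (hd xs)) - 1 = 0 then 0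
      else srch (\<lambda>y. B ?Q f (hd xs) (y # tl xs)) (Suc (hd xs)) - 1)"
    unfolding bt.simps by (rule comp_ifz[OF comp_prd[OF ST] comp_Zero comp_prd[OF ST]])
  show ?case by (rule comp_cong[OF c]) (simp add: Let_def)
qed

lemma prod_ind: "(\<Prod>i<(n::nat). if P i then 1 else 0 :: nat) = (if \<forall>i<n. P i then 1 else 0)"
  by (induction n) (auto simp: less_Suc_eq)

lemma prod_list_ind: "prod_list (map (\<lambda>j. if P j then 1 else 0 :: nat) js) = (if \<forall>j\<in>set js. P j then 1 else 0)"
  by (induction js) auto

definition "gI = ifz (sub (lnthp (Proj 1) (Proj 0)) (cnst 1)) (cnst 1) Zero"
definition "ISB = Comp (BP gI 1) [Comp LLEN [Proj 0], Proj 0]"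

lemma comp_ISB: "comp Z ISB 1 (\<lambda>xs. if \<forall>i<llen (xs!0). lnth (xs!0) i \<le> 1 then 1 else 0)"
proof -
  have g: "comp Z gI (Suc 1) (\<lambda>ys. if lnth (ys!1) (ys!0) - 1 = 0 then 1 else 0)"
    unfolding gI_def by (intro comp_ifz comp_sub comp_lnthp comp_Proj comp_cnst comp_Zero) auto
  have b: "comp Z (BP gI 1) 2 (\<lambda>ys. \<Prod>t<hd ys. if lnth (ys!1) t - 1 = 0 then 1 else 0)"
    by (rule comp_eqn[OF comp_BP[OF g]]) (auto simp: numeral_3_eq_3 numeral_2_eq_2 length_Suc_conv One_nat_def cong: if_cong)
  have c: "comp Z ISB 1 (\<lambda>xs. \<Prod>t<llen (xs!0). if lnth (xs!0) t - 1 = 0 then 1 else 0)"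
    unfolding ISB_def by (rule comp_cong[OF comp_C2[OF b comp_C1[OF comp_LLEN comp_Proj] comp_Proj]]) auto
  show ?thesis by (rule comp_cong[OF c]) (simp add: prod_ind)
qed

context fixes k :: nat begin

definition "gC2 = ifz (lnthp (Proj 2) (add (mult (cnst k) (Proj 1)) (Proj 0))) (cnst 1) Zero"
definition "gC = ifz (sub (add (mult (cnst k) (Proj 0)) (cnst k)) (Comp LLEN [Proj 1]))
   (ifz (Comp (BP gC2 2) [cnst k, Proj 0, Proj 1]) (cnst 1) Zero) (cnst 1)"
definition "COV = Comp (BP gC 1) [Comp LLEN [Proj 0], Proj 0]"

lemma comp_COV: "comp Z COV 1 (\<lambda>xs. if \<forall>x<llen (xs!0). k*x + k \<le> llen (xs!0) \<longrightarrow> (\<exists>j<k. lnth (xs!0) (k*x+j) \<noteq> 0) then 1 else 0)"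
proof -
  have g2: "comp Z gC2 (Suc 2) (\<lambda>ys. if lnth (ys!2) (k * ys!1 + ys!0) = 0 then 1 else 0)"
    unfolding gC2_def by (intro comp_ifz comp_lnthp comp_add comp_mult comp_Proj comp_cnst comp_Zero) auto
  have b2: "comp Z (BP gC2 2) 3 (\<lambda>ys. \<Prod>t<ys!0. if lnth (ys!2) (k * ys!1 + t) = 0 then 1 else 0)"
    by (rule comp_eqn[OF comp_BP[OF g2]]) (auto simp: numeral_3_eq_3 numeral_2_eq_2 length_Suc_conv One_nat_def cong: if_cong)
  have c3: "comp Z (Comp (BP gC2 2) [cnst k, Proj 0, Proj 1]) (Suc 1) (\<lambda>ys. \<Prod>t<k. if lnth (ys!1) (k * ys!0 + t) = 0 then 1 else 0)"
    by (rule comp_cong[OF comp_C3[OF b2 comp_cnst comp_Proj comp_Proj]]) auto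
  have l1: "comp Z (Comp LLEN [Proj 1]) (Suc 1) (\<lambda>ys. llen (ys!1))"
    by (rule comp_cong[OF comp_C1[OF comp_LLEN comp_Proj]]) auto
  have g: "comp Z gC (Suc 1) (\<lambda>ys. if k * ys!0 + k - llen (ys!1) = 0 then
      (if (\<Prod>t<k. if lnth (ys!1) (k * ys!0 + t) = 0 then 1 else (0::nat)) = 0 then 1 else 0) else 1)"
    unfolding gC_def
    by (rule comp_cong[OF comp_ifz[OF comp_sub[OF comp_add[OF comp_mult[OF comp_cnst comp_Proj] comp_cnst] l1] comp_ifz[OF c3 comp_cnst comp_Zero] comp_cnst]]) auto
  have b: "comp Z (BP gC 1) 2 (\<lambda>ys. \<Prod>t<hd ys. if k * t + k - llen (ys!1) = 0 then
      (if (\<Prod>j<k. if lnth (ys!1) (k * t + j) = 0 then 1 else (0::nat)) = 0 then 1 else 0) else 1)"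
    by (rule comp_eqn[OF comp_BP[OF g]]) (auto simp: numeral_3_eq_3 numeral_2_eq_2 length_Suc_conv One_nat_def cong: if_cong)
  have c: "comp Z COV 1 (\<lambda>xs. \<Prod>t<llen (xs!0). if k * t + k - llen (xs!0) = 0 then
      (if (\<Prod>j<k. if lnth (xs!0) (k * t + j) = 0 then 1 else (0::nat)) = 0 then 1 else 0) else 1)"
    unfolding COV_def by (rule comp_cong[OF comp_C2[OF b comp_C1[OF comp_LLEN comp_Proj] comp_Proj]]) (auto cong: if_cong)
  show ?thesis
  proof (rule comp_cong[OF c])
    fix xs :: "nat list"
    have "(if k * t + k - llen (xs!0) = 0 then
      (if (\<Prod>j<k. if lnth (xs!0) (k * t + j) = 0 then 1 else (0::nat)) = 0 then 1 else 0) else 1)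
      = (if k*t + k \<le> llen (xs!0) \<longrightarrow> (\<exists>j<k. lnth (xs!0) (k*t+j) \<noteq> 0) then 1 else (0::nat))" for t
      by (simp add: prod_ind)
    note eqt = this
    show "(\<Prod>t<llen (xs!0). if k * t + k - llen (xs!0) = 0 then
      (if (\<Prod>j<k. if lnth (xs!0) (k * t + j) = 0 then 1 else (0::nat)) = 0 then 1 else 0) else 1)
      = (if \<forall>x<llen (xs!0). k*x + k \<le> llen (xs!0) \<longrightarrow> (\<exists>j<k. lnth (xs!0) (k*x+j) \<noteq> 0) then 1 else (0::nat))"
      by (unfold eqt, rule prod_ind)
  qed
qed

definition "partv c j m = list_encode (map (\<lambda>t. lnth c (k*t+j)) [0..<m])"

definition "gP j = lnthp (Proj 1) (add (mult (cnst k) (Proj 0)) (cnst j))"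

lemma comp_PART: "comp Z (BLD (gP j) 1) 2 (\<lambda>ys. partv (ys!1) j (ys!0))"
proof -
  have g: "comp Z (gP j) (Suc 1) (\<lambda>ys. lnth (ys!1) (k * ys!0 + j))"
    unfolding gP_def by (intro comp_lnthp comp_add comp_mult comp_Proj comp_cnst) auto
  show ?thesis
    by (rule comp_eqn[OF comp_BLD[OF g]]) (auto simp: partv_def numeral_2_eq_2 length_Suc_conv One_nat_def)
qed

context fixes p :: recf and e :: "nat \<Rightarrow> nat" and hp :: "nat \<Rightarrow> recf" begin

definition "gN j = ifz (sub (mult (cnst k) (Proj 0)) (Comp LLEN [Proj 1]))
  (ifz (Comp (bt (hp j) 2 p) [Comp LLEN [Proj 1], cnst (e j), BLD (gP j) 1]) (cnst 1) Zero) (cnst 1)"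
definition "NOHj j = Comp (BP (gN j) 1) [suc (Comp LLEN [Proj 0]), Proj 0]"
definition "NOH = prodl (map NOHj [0..<k])"

lemma comp_NOHj: assumes hp: "comp J (hp j) 1 (\<lambda>xs. h (xs!0))"
  shows "comp J (NOHj j) 1 (\<lambda>xs. if \<forall>m<Suc (llen (xs!0)). k*m \<le> llen (xs!0) \<longrightarrow>
      B (\<lambda>x. h x \<in> J) p (llen (xs!0)) [e j, partv (xs!0) j m] = 0 then 1 else 0)"
proof -
  have bt: "comp J (bt (hp j) 2 p) 3 (\<lambda>zs. B (\<lambda>x. h x \<in> J) p (zs!0) [zs!1, zs!2])"
    by (rule comp_eqn[OF comp_bt[OF hp]]) (auto simp: numeral_3_eq_3 numeral_2_eq_2 length_Suc_conv One_nat_def)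
  have l1: "comp J (Comp LLEN [Proj 1]) (Suc 1) (\<lambda>ys. llen (ys!1))"
    by (rule comp_cong[OF comp_C1[OF comp_LLEN comp_Proj]]) auto
  have pr: "comp J (BLD (gP j) 1) (Suc 1) (\<lambda>ys. partv (ys!1) j (ys!0))"
    by (rule comp_eqn[OF comp_PART]) auto
  have c3: "comp J (Comp (bt (hp j) 2 p) [Comp LLEN [Proj 1], cnst (e j), BLD (gP j) 1]) (Suc 1)
     (\<lambda>ys. B (\<lambda>x. h x \<in> J) p (llen (ys!1)) [e j, partv (ys!1) j (ys!0)])"
    by (rule comp_cong[OF comp_C3[OF bt l1 comp_cnst pr]]) auto
  have p0: "comp J (Proj 0) (Suc 1) (\<lambda>ys. ys!0)" by (rule comp_Proj) simp
  have g: "comp J (gN j) (Suc 1) (\<lambda>ys. if k * ys!0 - llen (ys!1) = 0 then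
      (if B (\<lambda>x. h x \<in> J) p (llen (ys!1)) [e j, partv (ys!1) j (ys!0)] = 0 then 1 else 0) else 1)"
    unfolding gN_def by (rule comp_ifz[OF comp_sub[OF comp_mult[OF comp_cnst p0] l1] comp_ifz[OF c3 comp_cnst comp_Zero] comp_cnst])
  have b: "comp J (BP (gN j) 1) 2 (\<lambda>ys. \<Prod>t<ys!0. if k * t - llen (ys!1) = 0 then
      (if B (\<lambda>x. h x \<in> J) p (llen (ys!1)) [e j, partv (ys!1) j t] = 0 then 1 else 0) else (1::nat))"
    by (rule comp_eqn[OF comp_BP[OF g]]) (auto simp: numeral_2_eq_2 length_Suc_conv One_nat_def cong: if_cong)
  have c: "comp J (NOHj j) 1 (\<lambda>xs. \<Prod>t<Suc (llen (xs!0)). if k * t - llen (xs!0) = 0 then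
      (if B (\<lambda>x. h x \<in> J) p (llen (xs!0)) [e j, partv (xs!0) j t] = 0 then 1 else 0) else (1::nat))"
    unfolding NOHj_def by (rule comp_cong[OF comp_C2[OF b comp_suc[OF comp_C1[OF comp_LLEN comp_Proj]] comp_Proj]]) (auto cong: if_cong)
  show ?thesis
  proof (rule comp_cong[OF c])
    fix xs :: "nat list"
    have eqt: "(if k * t - llen (xs!0) = 0 then
      (if B (\<lambda>x. h x \<in> J) p (llen (xs!0)) [e j, partv (xs!0) j t] = 0 then 1 else 0) else (1::nat))
     = (if k*t \<le> llen (xs!0) \<longrightarrow> B (\<lambda>x. h x \<in> J) p (llen (xs!0)) [e j, partv (xs!0) j t] = 0 then 1 else 0)" for t
      by simp
    show "(\<Prod>t<Suc (llen (xs!0)). if k * t - llen (xs!0) = 0 then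
      (if B (\<lambda>x. h x \<in> J) p (llen (xs!0)) [e j, partv (xs!0) j t] = 0 then 1 else 0) else (1::nat))
     = (if \<forall>m<Suc (llen (xs!0)). k*m \<le> llen (xs!0) \<longrightarrow>
      B (\<lambda>x. h x \<in> J) p (llen (xs!0)) [e j, partv (xs!0) j m] = 0 then 1 else 0)"
      by (unfold eqt, rule prod_ind)
  qed
qed

lemma comp_NOH: assumes hp: "\<And>j. j < k \<Longrightarrow> comp J (hp j) 1 (\<lambda>xs. hh j (xs!0))"
  shows "comp J NOH 1 (\<lambda>xs. if \<forall>j<k. \<forall>m<Suc (llen (xs!0)). k*m \<le> llen (xs!0) \<longrightarrow>
      B (\<lambda>x. hh j x \<in> J) p (llen (xs!0)) [e j, partv (xs!0) j m] = 0 then 1 else 0)"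
proof -
  have "list_all2 (\<lambda>P F. comp J P 1 F) (map NOHj [0..<k]) (map (\<lambda>j xs. if \<forall>m<Suc (llen (xs!0)). k*m \<le> llen (xs!0) \<longrightarrow>
      B (\<lambda>x. hh j x \<in> J) p (llen (xs!0)) [e j, partv (xs!0) j m] = 0 then 1 else 0) [0..<k])"
    unfolding list_all2_map1 list_all2_map2 list_all2_same using comp_NOHj[OF hp] by simp
  from comp_prodl[OF this] show ?thesis unfolding NOH_def
    by (rule comp_cong) (simp add: o_def prod_list_ind)
qed

definition "TREE = mult ISB (mult COV NOH)"

definition "Tset Q = {c. (\<forall>i<llen c. lnth c i \<le> 1) \<and>
   (\<forall>x<llen c. k*x + k \<le> llen c \<longrightarrow> (\<exists>j<k. lnth c (k*x+j) \<noteq> 0)) \<and>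
   (\<forall>j<k. \<forall>m<Suc (llen c). k*m \<le> llen c \<longrightarrow> B (Q j) p (llen c) [e j, partv c j m] = 0)}"

lemma comp_TREE: assumes hp: "\<And>j. j < k \<Longrightarrow> comp J (hp j) 1 (\<lambda>xs. hh j (xs!0))"
  shows "comp J TREE 1 (\<lambda>xs. if xs!0 \<in> Tset (\<lambda>j x. hh j x \<in> J) then 1 else 0)"
proof -
  have m: "(if A then 1 else 0) * ((if Bb then 1 else 0) * (if C then 1 else 0)) = (if A \<and> Bb \<and> C then 1 else (0::nat))" for A Bb C
    by simp
  have t: "(c \<in> Tset Q) = ((\<forall>i<llen c. lnth c i \<le> 1) \<and>
   (\<forall>x<llen c. k*x + k \<le> llen c \<longrightarrow> (\<exists>j<k. lnth c (k*x+j) \<noteq> 0)) \<and>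
   (\<forall>j<k. \<forall>m<Suc (llen c). k*m \<le> llen c \<longrightarrow> B (Q j) p (llen c) [e j, partv c j m] = 0))" for c Q
    unfolding Tset_def by simp
  show ?thesis unfolding TREE_def
  proof (rule comp_cong[OF comp_mult[OF comp_ISB comp_mult[OF comp_COV comp_NOH[OF hp]]]])
    fix xs :: "nat list"
    show "(if \<forall>i<llen (xs ! 0). lnth (xs ! 0) i \<le> 1 then 1 else 0) *
          ((if \<forall>x<llen (xs ! 0). k * x + k \<le> llen (xs ! 0) \<longrightarrow> (\<exists>j<k. lnth (xs ! 0) (k * x + j) \<noteq> 0) then 1 else 0) *
           (if \<forall>j<k. \<forall>m<Suc (llen (xs ! 0)). k * m \<le> llen (xs ! 0) \<longrightarrow>
                B (\<lambda>x. hh j x \<in> J) p (llen (xs ! 0)) [e j, partv (xs ! 0) j m] = 0 then 1 else 0)) =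
          (if xs ! 0 \<in> Tset (\<lambda>j x. hh j x \<in> J) then 1 else (0::nat))"
      unfolding m t by (rule refl)
  qed
qed

end

end

abbreviation b2n :: "bool \<Rightarrow> nat" where "b2n b \<equiv> (if b then 1 else 0)"

lemma code_alt: "code \<sigma> = list_encode (map b2n \<sigma>)" by (simp add: code_def)
lemma llen_code: "llen (code \<sigma>) = length \<sigma>" by (simp add: code_alt llen_enc)
lemma lnth_code: "i < length \<sigma> \<Longrightarrow> lnth (code \<sigma>) i = b2n (\<sigma>!i)" by (simp add: code_alt lnth_enc)
lemma length_restr[simp]: "length (restr P n) = n" by (simp add: restr_def)
lemma nth_restr[simp]: "i < n \<Longrightarrow> restr P n ! i = (i \<in> P)" by (simp add: restr_def)

lemma kx_less: "j < k \<Longrightarrow> t < m \<Longrightarrow> k*t + j < k*(m::nat)"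
proof -
  assume "j < k" "t < m"
  then have "k*t + j < k*t + k" by simp
  also have "\<dots> = k * Suc t" by simp
  also have "\<dots> \<le> k * m" using \<open>t < m\<close> by (intro mult_le_mono2) simp
  finally show ?thesis .
qed

lemma partv_restr: "j < k \<Longrightarrow> k*m \<le> n \<Longrightarrow> partv k (code (restr P n)) j m = code (restr {x. k*x+j \<in> P} m)"
proof -
  assume j: "j < k" and m: "k*m \<le> n"
  have "map (\<lambda>t. lnth (code (restr P n)) (k*t+j)) [0..<m] = map b2n (restr {x. k*x+j \<in> P} m)"
  proof (rule nth_equalityI)
    fix i assume "i < length (map (\<lambda>t. lnth (code (restr P n)) (k*t+j)) [0..<m])"
    then have i: "i < m" by simp
    then have "k*i+j < n" using kx_less[OF j i] m by linarith
    then show "map (\<lambda>t. lnth (code (restr P n)) (k*t+j)) [0..<m] ! i = map b2n (restr {x. k*x+j \<in> P} m) ! i"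
      using i by (simp add: lnth_code)
  qed simp
  then show ?thesis by (simp add: partv_def code_alt)
qed

lemma Tset_iff: "c \<in> Tset k p e Q \<longleftrightarrow> (\<forall>i<llen c. lnth c i \<le> 1) \<and>
   (\<forall>x<llen c. k*x + k \<le> llen c \<longrightarrow> (\<exists>j<k. lnth c (k*x+j) \<noteq> 0)) \<and>
   (\<forall>j<k. \<forall>m<Suc (llen c). k*m \<le> llen c \<longrightarrow> B (Q j) p (llen c) [e j, partv k c j m] = 0)"
  unfolding Tset_def by (rule mem_Collect_eq)

lemma Tset_code: "c \<in> Tset k p e Q \<Longrightarrow> c \<in> range code"
proof -
  assume c: "c \<in> Tset k p e Q"
  let ?l = "list_decode c"
  have ce: "c = list_encode ?l" by simp
  have le: "\<forall>i<length ?l. ?l!i \<le> 1"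
  proof (intro allI impI)
    fix i assume "i < length ?l"
    moreover have "\<forall>i<llen c. lnth c i \<le> 1" using c unfolding Tset_iff by blast
    ultimately show "?l!i \<le> 1" using ce by (metis llen_enc lnth_enc)
  qed
  have "map b2n (map (\<lambda>n. n = 1) ?l) = ?l"
    by (rule nth_equalityI) (use le in \<open>auto simp: le_Suc_eq\<close>)
  then have "code (map (\<lambda>n. n = 1) ?l) = c" by (simp add: code_alt)
  then show ?thesis by (metis rangeI)
qed

lemma Tset_prefix: assumes s: "code \<sigma> \<in> Tset k p e Q" and pr: "prefix \<tau> \<sigma>" shows "code \<tau> \<in> Tset k p e Q"
proof -
  obtain \<rho> where \<sigma>: "\<sigma> = \<tau> @ \<rho>" using pr by (auto simp: prefix_def)
  let ?L = "length \<tau>" and ?L' = "length \<sigma>"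
  have LL: "?L \<le> ?L'" using \<sigma> by simp
  have agree: "i < ?L \<Longrightarrow> lnth (code \<sigma>) i = lnth (code \<tau>) i" for i
    using LL by (simp add: lnth_code \<sigma> nth_append)
  have isb: "\<forall>i<llen (code \<tau>). lnth (code \<tau>) i \<le> 1" by (simp add: llen_code lnth_code)
  have cov: "\<forall>x<llen (code \<tau>). k*x + k \<le> llen (code \<tau>) \<longrightarrow> (\<exists>j<k. lnth (code \<tau>) (k*x+j) \<noteq> 0)"
  proof (intro allI impI)
    fix x assume x: "x < llen (code \<tau>)" and kx: "k*x + k \<le> llen (code \<tau>)"
    have covs: "\<forall>x<llen (code \<sigma>). k*x + k \<le> llen (code \<sigma>) \<longrightarrow> (\<exists>j<k. lnth (code \<sigma>) (k*x+j) \<noteq> 0)"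
      using s unfolding Tset_iff by blast
    have "x < llen (code \<sigma>)" "k*x + k \<le> llen (code \<sigma>)" using x kx LL by (simp_all add: llen_code)
    then have "\<exists>j<k. lnth (code \<sigma>) (k*x+j) \<noteq> 0" using covs by blast
    then obtain j where j: "j < k" "lnth (code \<sigma>) (k*x+j) \<noteq> 0" by blast
    have "k*x+j < ?L" using j kx by (simp add: llen_code)
    then show "\<exists>j<k. lnth (code \<tau>) (k*x+j) \<noteq> 0" using j agree by metis
  qed
  have noh: "\<forall>j<k. \<forall>m<Suc (llen (code \<tau>)). k*m \<le> llen (code \<tau>) \<longrightarrow> B (Q j) p (llen (code \<tau>)) [e j, partv k (code \<tau>) j m] = 0"
  proof (intro allI impI)
    fix j m assume j: "j < k" and m: "m < Suc (llen (code \<tau>))" and km: "k*m \<le> llen (code \<tau>)"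
    have pv: "partv k (code \<tau>) j m = partv k (code \<sigma>) j m"
      unfolding partv_def
    proof (intro arg_cong[where f=list_encode] map_cong refl)
      fix t assume "t \<in> set [0..<m]"
      then have "k*t+j < ?L" using kx_less[OF j, of t m] km by (simp add: llen_code)
      then show "lnth (code \<tau>) (k*t+j) = lnth (code \<sigma>) (k*t+j)" using agree by simp
    qed
    have nohs: "\<forall>j<k. \<forall>m<Suc (llen (code \<sigma>)). k*m \<le> llen (code \<sigma>) \<longrightarrow> B (Q j) p (llen (code \<sigma>)) [e j, partv k (code \<sigma>) j m] = 0"
      using s unfolding Tset_iff by blast
    have "m < Suc (llen (code \<sigma>))" "k*m \<le> llen (code \<sigma>)" using m km LL by (simp_all add: llen_code)
    then have z: "B (Q j) p ?L' [e j, partv k (code \<sigma>) j m] = 0"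
      using nohs j unfolding llen_code by blast
    show "B (Q j) p (llen (code \<tau>)) [e j, partv k (code \<tau>) j m] = 0"
    proof (rule ccontr)
      assume nz: "B (Q j) p (llen (code \<tau>)) [e j, partv k (code \<tau>) j m] \<noteq> 0"
      have "B (Q j) p ?L' [e j, partv k (code \<tau>) j m] = B (Q j) p (llen (code \<tau>)) [e j, partv k (code \<tau>) j m]"
        using B_mono[OF nz, of ?L'] LL by (simp add: llen_code)
      then show False using z pv \<open>B (Q j) p (llen (code \<tau>)) [e j, partv k (code \<tau>) j m] \<noteq> 0\<close>
        by (simp add: llen_code)
    qed
  qed
  show ?thesis unfolding Tset_iff using isb cov noh by blast
qed

lemma Tset_tree: "binary_tree (Tset k p e Q)"
  unfolding binary_tree_def using Tset_code Tset_prefix by blast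

lemma kx_inj: "j < k \<Longrightarrow> j' < k \<Longrightarrow> k*x + j = k*x' + (j'::nat) \<Longrightarrow> x = x' \<and> j = j'"
proof -
  assume a: "j < k" "j' < k" "k*x + j = k*x' + j'"
  have 1: "(k*x + j) div k = x" "(k*x + j) mod k = j" using a(1) by auto
  have 2: "(k*x' + j') div k = x'" "(k*x' + j') mod k = j'" using a(2) by auto
  have "x = x'" by (metis 1(1) 2(1) a(3))
  moreover have "j = j'" by (metis 1(2) 2(2) a(3))
  ultimately show ?thesis by simp
qed

lemma Tset_infinite:
  assumes k: "0 < k" and cov: "(\<Union>j<k. Y j) = UNIV"
    and av: "\<And>j n y. j < k \<Longrightarrow> \<not> eval {x. Q j x} p [e j, code (restr (Y j) n)] y"
  shows "infinite (Tset k p e Q)"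
proof -
  define P0 where "P0 = {k*x+j | x j. j < k \<and> x \<in> Y j}"
  have P0: "j < k \<Longrightarrow> {x. k*x+j \<in> P0} = Y j" for j
  proof -
    assume j: "j < k"
    show ?thesis
    proof (intro set_eqI iffI)
      fix x assume "x \<in> {x. k*x+j \<in> P0}"
      then obtain x' j' where "k*x+j = k*x'+j'" "j' < k" "x' \<in> Y j'" unfolding P0_def by blast
      then show "x \<in> Y j" using kx_inj[OF j] by metis
    next
      fix x assume "x \<in> Y j" then show "x \<in> {x. k*x+j \<in> P0}" unfolding P0_def using j by blast
    qed
  qed
  have mem: "code (restr P0 n) \<in> Tset k p e Q" for n
    unfolding Tset_iff
  proof (intro conjI allI impI)
    fix i assume "i < llen (code (restr P0 n))"
    then show "lnth (code (restr P0 n)) i \<le> 1" by (simp add: llen_code lnth_code)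
  next
    fix x assume x: "x < llen (code (restr P0 n))" and kx: "k*x + k \<le> llen (code (restr P0 n))"
    obtain j where j: "j < k" "x \<in> Y j" using cov by blast
    then have "k*x+j \<in> P0" using P0 by blast
    moreover have "k*x+j < n" using j kx by (simp add: llen_code)
    ultimately have "lnth (code (restr P0 n)) (k*x+j) \<noteq> 0" by (simp add: lnth_code)
    then show "\<exists>j<k. lnth (code (restr P0 n)) (k*x+j) \<noteq> 0" using j by blast
  next
    fix j m assume j: "j < k" and m: "m < Suc (llen (code (restr P0 n)))" and km: "k*m \<le> llen (code (restr P0 n))"
    have pv: "partv k (code (restr P0 n)) j m = code (restr (Y j) m)"
      using partv_restr[OF j, of m n P0] km P0[OF j] by (simp add: llen_code)
    show "B (Q j) p (llen (code (restr P0 n))) [e j, partv k (code (restr P0 n)) j m] = 0"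
    proof (rule ccontr)
      assume "B (Q j) p (llen (code (restr P0 n))) [e j, partv k (code (restr P0 n)) j m] \<noteq> 0"
      then obtain y where "B (Q j) p (llen (code (restr P0 n))) [e j, code (restr (Y j) m)] = Suc y"
        unfolding pv by (metis not0_implies_Suc)
      then have "eval {x. Q j x} p [e j, code (restr (Y j) m)] y" by (rule B_sound)
      then show False using av[OF j] by blast
    qed
  qed
  have inj: "inj (\<lambda>n. code (restr P0 n))"
  proof (rule injI)
    fix n n' assume "code (restr P0 n) = code (restr P0 n')"
    then have "llen (code (restr P0 n)) = llen (code (restr P0 n'))" by simp
    then show "n = n'" by (simp add: llen_code)
  qed
  have "infinite (range (\<lambda>n. code (restr P0 n)))" using inj finite_imageD infinite_UNIV_nat by blast
  moreover have "range (\<lambda>n. code (restr P0 n)) \<subseteq> Tset k p e Q" using mem by blast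
  ultimately show ?thesis using infinite_super by blast
qed

lemma Tset_path:
  assumes k: "0 < k" and path: "is_path P (Tset k p e Q)"
  shows "(\<Union>j<k. {x. k*x+j \<in> P}) = UNIV"
    and "\<And>j n y. j < k \<Longrightarrow> \<not> eval {x. Q j x} p [e j, code (restr {x. k*x+j \<in> P} n)] y"
proof -
  have mem: "code (restr P n) \<in> Tset k p e Q" for n using path by (simp add: is_path_def)
  show "(\<Union>j<k. {x. k*x+j \<in> P}) = UNIV"
  proof (intro set_eqI iffI)
    fix x :: nat
    let ?n = "k*x + k"
    have covs: "\<forall>x<llen (code (restr P ?n)). k*x + k \<le> llen (code (restr P ?n)) \<longrightarrow> (\<exists>j<k. lnth (code (restr P ?n)) (k*x+j) \<noteq> 0)"
      using mem[of ?n] unfolding Tset_iff by blast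
    have "x*1 \<le> x*k" using k by (intro mult_le_mono2) simp
    then have "x \<le> k*x" by (simp add: mult.commute)
    then have "x < k*x + k" using k by linarith
    then have "x < llen (code (restr P ?n))" "k*x + k \<le> llen (code (restr P ?n))" by (simp_all add: llen_code)
    then obtain j where j: "j < k" "lnth (code (restr P ?n)) (k*x+j) \<noteq> 0" using covs by blast
    have "k*x+j < ?n" using j by simp
    then have "lnth (code (restr P ?n)) (k*x+j) = b2n (k*x+j \<in> P)" by (simp add: lnth_code)
    then have "k*x+j \<in> P" using j(2) by presburger
    then show "x \<in> (\<Union>j<k. {x. k*x+j \<in> P})" using j by blast
  qed simp
next
  have mem: "code (restr P n) \<in> Tset k p e Q" for n using path by (simp add: is_path_def)
  fix j n y assume j: "j < k"
  show "\<not> eval {x. Q j x} p [e j, code (restr {x. k*x+j \<in> P} n)] y"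
  proof
    assume "eval {x. Q j x} p [e j, code (restr {x. k*x+j \<in> P} n)] y"
    then obtain s where s: "B (Q j) p s [e j, code (restr {x. k*x+j \<in> P} n)] = Suc y" using B_complete by blast
    let ?N = "k*n + s"
    have nohs: "\<forall>j<k. \<forall>m<Suc (llen (code (restr P ?N))). k*m \<le> llen (code (restr P ?N)) \<longrightarrow>
       B (Q j) p (llen (code (restr P ?N))) [e j, partv k (code (restr P ?N)) j m] = 0"
      using mem[of ?N] unfolding Tset_iff by blast
    have "n*1 \<le> n*k" using k by (intro mult_le_mono2) simp
    then have "n \<le> k*n" by (simp add: mult.commute)
    then have "n < Suc (k*n + s)" by linarith
    then have "n < Suc (llen (code (restr P ?N)))" "k*n \<le> llen (code (restr P ?N))" by (simp_all add: llen_code mult.commute)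
    then have "B (Q j) p (llen (code (restr P ?N))) [e j, partv k (code (restr P ?N)) j n] = 0"
      using nohs j by blast
    then have "B (Q j) p ?N [e j, partv k (code (restr P ?N)) j n] = 0" by (simp only: llen_code length_restr)
    moreover have "partv k (code (restr P ?N)) j n = code (restr {x. k*x+j \<in> P} n)"
      by (rule partv_restr[OF j]) simp
    moreover have "B (Q j) p ?N [e j, code (restr {x. k*x+j \<in> P} n)] = Suc y"
      by (rule B_up[OF s]) simp
    ultimately show False by simp
  qed
qed

fun hh :: "nat \<Rightarrow> nat \<Rightarrow> nat" where
  "hh 0 x = 2 * x" | "hh (Suc j) x = Suc (2 * hh j x)"

fun jl :: "nat set \<Rightarrow> nat set list \<Rightarrow> nat set" where
  "jl d [] = d" | "jl d (A # As) = join A (jl d As)"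

lemma join_even: "(2*n \<in> join A Bs) = (n \<in> A)"
  unfolding join_def by (auto simp: Suc_double_not_eq_double double_not_eq_Suc_double)
lemma join_odd: "(Suc (2*n) \<in> join A Bs) = (n \<in> Bs)"
  unfolding join_def by (auto simp: Suc_double_not_eq_double double_not_eq_Suc_double)

lemma jl_mem: "j < length As \<Longrightarrow> (x \<in> As ! j) = (hh j x \<in> jl d As)"
proof (induction As arbitrary: j)
  case Nil then show ?case by simp
next
  case (Cons A As)
  show ?case
  proof (cases j)
    case 0 then show ?thesis by (simp add: join_even)
  next
    case (Suc j') then show ?thesis using Cons by (simp add: join_odd)
  qed
qed

fun hpp :: "nat \<Rightarrow> recf" where
  "hpp 0 = add (Proj 0) (Proj 0)" | "hpp (Suc j) = suc (add (hpp j) (hpp j))"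

lemma comp_hpp: "comp Z (hpp j) 1 (\<lambda>xs. hh j (xs!0))"
proof (induction j)
  case 0 show ?case unfolding hpp.simps by (rule comp_cong[OF comp_add[OF comp_Proj comp_Proj]]) auto
next
  case (Suc j) show ?case unfolding hpp.simps by (rule comp_cong[OF comp_suc[OF comp_add[OF Suc Suc]]]) auto
qed

lemma jl_range: "scott_set S \<Longrightarrow> set As \<subseteq> S \<Longrightarrow> d \<in> S \<Longrightarrow> jl d As \<in> S"
  by (induction As) (auto simp: scott_set_def)

lemma comp_turing: "comp Bo P 1 (\<lambda>xs. if xs!0 \<in> A then 1 else 0) \<Longrightarrow> turing_le A Bo"
proof -
  assume c: "comp Bo P 1 (\<lambda>xs. if xs!0 \<in> A then 1 else 0)"
  have "eval Bo P [x] (if x \<in> A then 1 else 0)" for x using compD[OF c, of "[x]"] by simp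
  then show ?thesis unfolding turing_le_def by blast
qed

lemma scott_turing: "scott_set S \<Longrightarrow> Bo \<in> S \<Longrightarrow> comp Bo P 1 (\<lambda>xs. if xs!0 \<in> A then 1 else 0) \<Longrightarrow> A \<in> S"
  unfolding scott_set_def using comp_turing by blast

lemma core:
  fixes k :: nat and Y :: "nat \<Rightarrow> nat set" and ix e :: "nat \<Rightarrow> nat"
  assumes ee: "effective_enum U" and sc: "scott_set (range X)" and k: "0 < k"
    and cov: "(\<Union>j<k. Y j) = UNIV" and bad: "\<And>j. j < k \<Longrightarrow> Y j \<notin> U (X (ix j)) (e j)"
  shows "\<exists>Y'. (\<forall>j<k. Y' j \<in> range X \<and> Y' j \<notin> U (X (ix j)) (e j)) \<and> (\<Union>j<k. Y' j) = UNIV"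
proof -
  have "\<exists>p. \<forall>Z e. U Z e = {X. \<exists>n y. eval Z p [e, code (restr X n)] y}"
    using ee unfolding effective_enum_def by (rule conjunct1)
  then obtain p where pU0: "\<forall>Z e. U Z e = {X. \<exists>n y. eval Z p [e, code (restr X n)] y}" by (elim exE)
  have pU: "U Z e' = {X. \<exists>n y. eval Z p [e', code (restr X n)] y}" for Z e' using pU0 by blast
  define As where "As = map (\<lambda>j. X (ix j)) [0..<k]"
  define J where "J = jl (X 0) As"
  have J: "J \<in> range X" unfolding J_def As_def by (rule jl_range[OF sc]) auto
  define Q where "Q = (\<lambda>j x. hh j x \<in> J)"
  have QX: "j < k \<Longrightarrow> {x. Q j x} = X (ix j)" for j
  proof -
    assume j: "j < k"
    have l: "j < length As" and a: "As ! j = X (ix j)" using j by (simp_all add: As_def)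
    show ?thesis
    proof (intro set_eqI)
      fix x show "x \<in> {x. Q j x} \<longleftrightarrow> x \<in> X (ix j)"
        using jl_mem[OF l, of x "X 0"] unfolding a Q_def J_def by simp
    qed
  qed
  let ?T = "Tset k p e Q"
  have tree: "binary_tree ?T" by (rule Tset_tree)
  have inf: "infinite ?T"
  proof (rule Tset_infinite[OF k cov])
    fix j n y assume j: "j < k"
    have "Y j \<notin> U (X (ix j)) (e j)" by (rule bad[OF j])
    then have "\<not> eval (X (ix j)) p [e j, code (restr (Y j) n)] y" unfolding pU by blast
    then show "\<not> eval {x. Q j x} p [e j, code (restr (Y j) n)] y" unfolding QX[OF j] .
  qed
  have "comp J (TREE k p e hpp) 1 (\<lambda>xs. if xs!0 \<in> Tset k p e (\<lambda>j x. hh j x \<in> J) then 1 else 0)"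
    by (rule comp_TREE) (rule comp_hpp)
  then have "?T \<in> range X" unfolding Q_def by (rule scott_turing[OF sc J])
  then obtain P where P: "P \<in> range X" and path: "is_path P ?T"
    using sc tree inf unfolding scott_set_def by blast
  define Y' where "Y' = (\<lambda>j. {x. k*x+j \<in> P})"
  have c: "(\<Union>j<k. Y' j) = UNIV" unfolding Y'_def by (rule Tset_path(1)[OF k path])
  have av: "j < k \<Longrightarrow> Y' j \<notin> U (X (ix j)) (e j)" for j
  proof -
    assume j: "j < k"
    have "\<forall>n y. \<not> eval {x. Q j x} p [e j, code (restr {x. k*x+j \<in> P} n)] y"
      using Tset_path(2)[OF k path j] by blast
    then have "\<forall>n y. \<not> eval (X (ix j)) p [e j, code (restr (Y' j) n)] y" unfolding QX[OF j] Y'_def .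
    then show ?thesis unfolding pU by blast
  qed
  have rg: "Y' j \<in> range X" for j
  proof (rule scott_turing[OF sc P])
    show "comp P (Comp Orc [add (mult (cnst k) (Proj 0)) (cnst j)]) 1 (\<lambda>xs. if xs ! 0 \<in> Y' j then 1 else 0)"
      by (rule comp_cong[OF comp_C1[OF comp_Orc comp_add[OF comp_mult[OF comp_cnst comp_Proj] comp_cnst]]]) (auto simp: Y'_def)
  qed
  show ?thesis using c av rg by blast
qed

lemma key:
  assumes coh: "M_cohesive S UC" and lg: "largeness (UC \<inter> UE)" and Z: "Z \<in> S" and ZC: "Z \<in> UC"
  shows "Z \<in> UE"
proof -
  have "UC \<subseteq> L Z \<or> UC \<subseteq> L (- Z)" using coh Z unfolding M_cohesive_def by blast
  moreover have "Z \<notin> L (- Z)" unfolding L_def by simp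
  ultimately have ZL: "UC \<subseteq> L Z" using ZC by blast
  have nZ: "- Z \<notin> UC"
  proof
    assume "- Z \<in> UC"
    then have "- Z \<in> L Z" using ZL by blast
    then show False unfolding L_def by simp
  qed
  define Yc where "Yc = (\<lambda>t::nat. if t = 0 then Z else - Z)"
  have "(\<Union>j<2. Yc j) = UNIV"
  proof -
    have "Yc 0 \<union> Yc 1 \<subseteq> (\<Union>j<2. Yc j)" by force
    moreover have "Yc 0 \<union> Yc 1 = UNIV" unfolding Yc_def by auto
    ultimately show ?thesis by blast
  qed
  then obtain j where j: "j < 2" "Yc j \<in> UC \<inter> UE" using lg unfolding largeness_def by blast
  show ?thesis
  proof (cases "j = 0")
    case True then show ?thesis using j unfolding Yc_def by simp
  next
    case False then show ?thesis using j nZ unfolding Yc_def by simp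
  qed
qed

theorem lemma2p9:
  fixes U :: "nat set \<Rightarrow> nat \<Rightarrow> nat set set"
    and X :: "nat \<Rightarrow> nat set"
    and M :: "nat set"
    and C D E :: "(nat \<times> nat) set"
  assumes "effective_enum U"
    and "scott_set (range X)"
    and "M = coded_by X"
    and "M_cohesive (range X) (UM U X C)"
    and "largeness (UM U X C \<inter> UM U X D)"
    and "largeness (UM U X C \<inter> UM U X E)"
  shows "largeness (UM U X C \<inter> UM U X D \<inter> UM U X E)"
proof -
  note ee = assms(1) and sc = assms(2) and coh = assms(4) and lD = assms(5) and lE = assms(6)
  have uc: "upward_closed (U Z e)" for Z e using ee unfolding effective_enum_def by blast
  have UMup: "upward_closed (UM U X S)" for S
    unfolding upward_closed_def UM_def
  proof (intro allI impI)
    fix A B assume "A \<in> {A. \<forall>(e, i)\<in>S. A \<in> U (X i) e}" and "A \<subseteq> B"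
    then show "B \<in> {A. \<forall>(e, i)\<in>S. A \<in> U (X i) e}" using uc unfolding upward_closed_def by blast
  qed
  let ?A = "UM U X C \<inter> UM U X D \<inter> UM U X E"
  have up: "upward_closed ?A" using UMup unfolding upward_closed_def by blast
  have univ: "(\<Union>j<(1::nat). (\<lambda>_. UNIV) j) = (UNIV :: nat set)" by (simp add: lessThan_def)
  have u1: "UNIV \<in> UM U X C \<inter> UM U X D" using lD univ unfolding largeness_def by blast
  have u2: "UNIV \<in> UM U X C \<inter> UM U X E" using lE univ unfolding largeness_def by blast
  have ne: "?A \<noteq> {}" using u1 u2 by blast
  have cv: "\<exists>j<k. Y j \<in> ?A" if cov: "(\<Union>j<k. Y j) = UNIV" for k and Y :: "nat \<Rightarrow> nat set"
  proof (rule ccontr)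
    assume nA: "\<not> (\<exists>j<k. Y j \<in> ?A)"
    have k: "0 < k" using cov by (cases k) auto
    have "\<forall>j<k. \<exists>q. q \<in> C \<union> D \<union> E \<and> Y j \<notin> U (X (snd q)) (fst q)"
    proof (intro allI impI)
      fix j assume "j < k"
      then have "Y j \<notin> ?A" using nA by blast
      then show "\<exists>q. q \<in> C \<union> D \<union> E \<and> Y j \<notin> U (X (snd q)) (fst q)"
        unfolding UM_def by auto
    qed
    then obtain f where f: "\<And>j. j < k \<Longrightarrow> f j \<in> C \<union> D \<union> E \<and> Y j \<notin> U (X (snd (f j))) (fst (f j))"
      by metis
    obtain Y' where Y': "\<forall>j<k. Y' j \<in> range X \<and> Y' j \<notin> U (X (snd (f j))) (fst (f j))" and cov': "(\<Union>j<k. Y' j) = UNIV"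
      using core[OF ee sc k cov, of "\<lambda>j. snd (f j)" "\<lambda>j. fst (f j)"] f by blast
    have notA: "Y' j \<notin> ?A" if j: "j < k" for j
    proof
      assume a: "Y' j \<in> ?A"
      have "f j \<in> C \<union> D \<union> E" using f[OF j] by blast
      then have "Y' j \<in> U (X (snd (f j))) (fst (f j))" using a unfolding UM_def by (cases "f j") auto
      then show False using Y' j by blast
    qed
    obtain j where j: "j < k" "Y' j \<in> UM U X C \<inter> UM U X D" using lD cov' unfolding largeness_def by blast
    have "Y' j \<in> UM U X E" using key[OF coh lE, of "Y' j"] Y' j by blast
    then have "Y' j \<in> ?A" using j by blast
    then show False using notA j by blast
  qed
  show ?thesis unfolding largeness_def using ne up cv by blast
qed

end
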